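(* Let $\mathcal{G}=(\mathcal{V},\mathcal{E})$ be an undirected graph with $\mathcal{V}=\{1,\ldots,n\}$ whose edge set contains all self-loops, and let $\pi$ be a probability distribution on $\mathcal{V}$. Let $\lambda_2^\star$ be the optimal value of $$\min_{P\ge 0}\ \lambda_2(P)\quad\text{s.t.}\quad P(i,j)=0\ \forall (i,j)\notin\mathcal{E},\quad \sum_{j\in\mathcal{V}}P(i,j)=1\ \forall i\in\mathcal{V},\quad \pi(i)P(i,j)=\pi(j)P(j,i)\ \forall (i,j)\in\mathcal{E},$$ and let $\tau_2^\star=\frac{1}{1-\lambda_2^\star}$. Then $$\tau_2^\star\ \ge\ \max_{\mathbf{w}\in\mathbb{R}^n,\ \Psi(1),\ldots,\Psi(n)\in\mathbb{R}^n}\ \sum_{k\in\mathcal{V}}\pi(k)\|\Psi(k)\|^2$$ subject to $$\|\Psi(i)-\Psi(j)\|^2\le w(i)+w(j)\ \ \forall (i,j)\in\mathcal{E},\qquad \sum_{k=1}^n\pi(k)\Psi(k)=\mathbf{0},\qquad \sum_{i=1}^n\pi(i)w(i)=1,$$ where $\|\cdot\|$ is the Euclidean norm. Moreover this bound is tight, i.e. equality holds.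
   Context: For a transition matrix $P$ on $\mathcal{V}$ reversible with respect to $\pi$, its eigenvalues are real and ordered $1=\lambda_1(P)\ge\lambda_2(P)\ge\cdots\ge\lambda_n(P)\ge -1$; $\lambda_2(P)$ denotes the second largest eigenvalue, and the relaxation time is $\tau_2(P)=1/(1-\lambda_2(P))$. Edges are treated as ordered pairs, with $(i,j)\in\mathcal{E}$ iff $(j,i)\in\mathcal{E}$. *)

theory Defs
  imports "HOL-Analysis.Analysis" "HOL-Computational_Algebra.Polynomial"
    "HOL-Library.Multiset" "HOL-Library.Extended_Real"
begin

definition char_poly_vec :: "real^'n^'n \<Rightarrow> real poly" where
  "char_poly_vec A = det (\<chi> i j. (if i = j then [:0, 1:] else 0) - [:A $ i $ j:])"

text \<open>Eigenvalues (real roots of the characteristic polynomial, with multiplicity),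
  listed in non-increasing order; for a reversible transition matrix all eigenvalues are real.\<close>
definition eigs_desc :: "real^'n^'n \<Rightarrow> real list" where
  "eigs_desc A = rev (sorted_list_of_multiset (proots (char_poly_vec A)))"

definition lambda2 :: "real^'n^'n \<Rightarrow> real" where
  "lambda2 A = eigs_desc A ! 1"

definition feasible_P :: "('n \<times> 'n) set \<Rightarrow> ('n \<Rightarrow> real) \<Rightarrow> real^'n^'n \<Rightarrow> bool" where
  "feasible_P E \<pi> P \<longleftrightarrow>
     (\<forall>i j. P $ i $ j \<ge> 0) \<and>
     (\<forall>i j. (i, j) \<notin> E \<longrightarrow> P $ i $ j = 0) \<and>
     (\<forall>i. (\<Sum>j\<in>UNIV. P $ i $ j) = 1) \<and>
     (\<forall>i j. (i, j) \<in> E \<longrightarrow> \<pi> i * P $ i $ j = \<pi> j * P $ j $ i)"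

definition lambda2_star :: "('n::finite \<times> 'n) set \<Rightarrow> ('n \<Rightarrow> real) \<Rightarrow> real" where
  "lambda2_star E \<pi> = Inf {lambda2 P | P. feasible_P E \<pi> P}"

text \<open>tau_2^* = 1/(1 - lambda_2^*), in the extended reals (infinite if lambda_2^* = 1).\<close>
definition tau2_star :: "('n::finite \<times> 'n) set \<Rightarrow> ('n \<Rightarrow> real) \<Rightarrow> ereal" where
  "tau2_star E \<pi> = inverse (ereal (1 - lambda2_star E \<pi>))"

definition feasible_emb :: "('n \<times> 'n) set \<Rightarrow> ('n \<Rightarrow> real) \<Rightarrow> real^'n \<Rightarrow> ('n \<Rightarrow> real^'n) \<Rightarrow> bool" where
  "feasible_emb E \<pi> w \<Psi> \<longleftrightarrow>
     (\<forall>i j. (i, j) \<in> E \<longrightarrow> (norm (\<Psi> i - \<Psi> j))\<^sup>2 \<le> w $ i + w $ j) \<and>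
     (\<Sum>k\<in>UNIV. \<pi> k *\<^sub>R \<Psi> k) = 0 \<and>
     (\<Sum>i\<in>UNIV. \<pi> i * w $ i) = 1"

definition emb_obj :: "('n::finite \<Rightarrow> real) \<Rightarrow> ('n \<Rightarrow> real^'n) \<Rightarrow> real" where
  "emb_obj \<pi> \<Psi> = (\<Sum>k\<in>UNIV. \<pi> k * (norm (\<Psi> k))\<^sup>2)"

end

theory Submission
  imports Defs
begin


lemma pc_add: "[:a + b:] = [:a:] + [:b:]" by simp
lemma pc_mult: "[:a * b:] = [:a:] * [:(b::'a::comm_ring_1):]" by simp

lemma const_poly_sum: "finite A \<Longrightarrow> [:sum f A:] = (\<Sum>x\<in>A. [:f x:])"
  by (induction A rule: finite_induct) (auto simp: pc_add)

lemma const_poly_prod: "finite A \<Longrightarrow> [:prod f A:] = (\<Prod>x\<in>A. [:(f x)::'a::comm_ring_1:])"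
  by (induction A rule: finite_induct) (auto simp: pc_mult simp del: pCons_0_0)

lemma det_const_poly:
  fixes A :: "'a::comm_ring_1^'n^'n"
  shows "det (\<chi> i j. [:A$i$j:]) = [:det A:]"
proof -
  have fin: "finite {p. p permutes (UNIV :: 'n set)}" by (simp add: finite_permutations)
  show ?thesis
    unfolding det_def const_poly_sum[OF fin]
    by (rule sum.cong) (simp_all add: pc_mult const_poly_prod of_int_poly del: pCons_0_0)
qed

lemma char_poly_eigen:
  fixes P V :: "real^'n^'n" and \<mu> :: "'n \<Rightarrow> real"
  assumes "det V \<noteq> 0" and eig: "\<And>i k. (P ** V)$i$k = V$i$k * \<mu> k"
  shows "char_poly_vec P = (\<Prod>k\<in>UNIV. [:- \<mu> k, 1:])"
proof -
  define XP where "XP = (\<chi> i j. (if i = j then [:0, 1:] else 0) - [:P $ i $ j:])"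
  define Vp where "Vp = (\<chi> i j. [:V$i$j:])"
  define D where "D = (\<chi> i j. if i = j then [:- \<mu> i, 1:] else (0::real poly))"
  have "XP ** Vp = Vp ** D"
  proof -
   have "(XP ** Vp)$i$k = (Vp ** D)$i$k" for i k
   proof -
    have "(XP ** Vp)$i$k = (\<Sum>j\<in>UNIV. ((if i = j then [:0, 1:] else 0) - [:P $ i $ j:]) * [:V$j$k:])"
      by (simp add: XP_def Vp_def matrix_matrix_mult_def)
    also have "\<dots> = (\<Sum>j\<in>UNIV. (if i = j then [:0, 1:] * [:V$j$k:] else 0) - [:P $ i $ j * V$j$k:])"
      by (rule sum.cong) (auto simp: left_diff_distrib pc_mult simp del: pCons_0_0 mult_pCons_left mult_pCons_right)
    also have "\<dots> = (\<Sum>j\<in>UNIV. (if i = j then [:0, 1:] * [:V$j$k:] else 0)) - (\<Sum>j\<in>UNIV. [:P $ i $ j * V$j$k:])"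
      by (simp only: sum_subtractf)
    also have "\<dots> = [:0, 1:] * [:V$i$k:] - [:(P ** V)$i$k:]"
      by (simp add: const_poly_sum matrix_matrix_mult_def)
    also have "\<dots> = [:V$i$k:] * [:- \<mu> k, 1:]"
      by (simp add: eig algebra_simps)
    also have "\<dots> = (Vp ** D)$i$k"
      by (simp add: Vp_def D_def matrix_matrix_mult_def if_distrib cong: if_cong)
    finally show "(XP ** Vp)$i$k = (Vp ** D)$i$k" .
   qed
   then show ?thesis by (simp add: vec_eq_iff)
  qed
  hence "det XP * det Vp = det Vp * det D" by (metis det_mul mult.commute)
  moreover have "det Vp \<noteq> 0" using assms(1) by (simp add: Vp_def det_const_poly)
  ultimately have "det XP = det D" by simp
  moreover have "det D = (\<Prod>k\<in>UNIV. [:- \<mu> k, 1:])"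
    by (subst det_diagonal) (auto simp: D_def)
  ultimately show ?thesis by (simp add: char_poly_vec_def XP_def)
qed


lemma quad_zero_aux:
  fixes a b :: real
  assumes "\<And>t. 2 * t * a \<le> t^2 * b"
  shows "a = 0"
proof (rule ccontr)
  assume "a \<noteq> 0"
  define c where "c = \<bar>b\<bar> + 1"
  define t where "t = a / c"
  have pos: "c > 0" by (simp add: c_def)
  have tc: "t * c = a" using pos by (simp add: t_def)
  have "2 * t * a \<le> t^2 * b" by (rule assms)
  hence h: "(2 * t * a) * c^2 \<le> (t^2 * b) * c^2" using pos by (simp add: mult_right_mono)
  have e1: "(2 * t * a) * c^2 = 2 * a * a * c"
    using tc by (simp add: power2_eq_square)
  have e2: "(t^2 * b) * c^2 = a * a * b"
    using tc by (simp add: power2_eq_square) (metis mult.commute mult.left_commute)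
  have aa: "a * a > 0" using \<open>a \<noteq> 0\<close> by (metis not_real_square_gt_zero)
  have "b < 2 * c" by (simp add: c_def)
  hence "a * a * b < a * a * (2 * c)" using aa by (rule mult_strict_left_mono)
  thus False using h e1 e2 by (simp add: algebra_simps)
qed

lemma sym_inner:
  fixes A :: "real^'n^'n"
  assumes "\<And>i j. A$i$j = A$j$i"
  shows "x \<bullet> (A *v y) = (A *v x) \<bullet> y"
proof -
  have "transpose A = A" using assms by (simp add: transpose_def vec_eq_iff)
  hence "x v* A = A *v x" by (metis transpose_transpose vector_transpose_matrix)
  thus ?thesis using dot_lmul_matrix[of x A y] by simp
qed

lemma spectral_subspace:
  fixes A :: "real^'n^'n"
  assumes sym: "\<And>i j. A$i$j = A$j$i"
  shows "subspace W \<Longrightarrow> (\<forall>x\<in>W. A *v x \<in> W) \<Longrightarrow>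
    \<exists>B. B \<subseteq> W \<and> finite B \<and> pairwise orthogonal B \<and>
        (\<forall>u\<in>B. norm u = 1 \<and> A *v u = (u \<bullet> (A *v u)) *\<^sub>R u) \<and> span B = W"
proof (induction "dim W" arbitrary: W rule: less_induct)
  case less
  note symi = sym_inner[OF sym]
  show ?case
  proof (cases "W = {0}")
    case True
    then show ?thesis by (intro exI[of _ "{}"]) auto
  next
    case False
    then obtain x where x: "x \<in> W" "x \<noteq> 0" using less.prems subspace_0 by blast
    define S where "S = W \<inter> sphere 0 1"
    have "(x /\<^sub>R norm x) \<in> S" using x less.prems by (simp add: S_def subspace_scale)
    hence Sne: "S \<noteq> {}" by blast
    have "compact S" unfolding S_def
      by (intro closed_Int_compact closed_subspace less.prems compact_sphere)
    moreover have "continuous_on S (\<lambda>x. x \<bullet> (A *v x))"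
      by (intro continuous_intros linear_continuous_on matrix_vector_mul_linear) 
    ultimately obtain u where uS: "u \<in> S" and umax: "\<And>y. y \<in> S \<Longrightarrow> y \<bullet> (A *v y) \<le> u \<bullet> (A *v u)"
      using continuous_attains_sup[of S "\<lambda>x. x \<bullet> (A *v x)"] Sne by blast
    define \<mu> where "\<mu> = u \<bullet> (A *v u)"
    have uW: "u \<in> W" and nu: "norm u = 1" using uS by (auto simp: S_def)
    have uu: "u \<bullet> u = 1" using nu by (simp add: norm_eq_1)
    have Ainv: "\<And>y. y \<in> W \<Longrightarrow> A *v y \<in> W" using less.prems by blast
    have bound: "y \<bullet> (A *v y) \<le> \<mu> * (y \<bullet> y)" if "y \<in> W" for y
    proof (cases "y = 0")
      case True then show ?thesis by simp
    next
      case False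
      define z where "z = y /\<^sub>R norm y"
      have "z \<in> S" using that False less.prems by (simp add: S_def z_def subspace_scale)
      hence "z \<bullet> (A *v z) \<le> \<mu>" using umax \<mu>_def by blast
      moreover have "z \<bullet> (A *v z) = (y \<bullet> (A *v y)) / (norm y)^2"
        by (simp add: z_def matrix_vector_mult_scaleR inner_scaleR_left inner_scaleR_right power2_eq_square divide_inverse)
      moreover have "y \<bullet> y = (norm y)^2" by (simp add: power2_norm_eq_inner)
      moreover have "norm y > 0" using False by simp
      ultimately show ?thesis by (simp add: field_simps)
    qed
    have orth0: "v \<bullet> (A *v u) = 0" if "v \<in> W" "v \<bullet> u = 0" for v
    proof (rule quad_zero_aux[of _ "\<mu> * (v \<bullet> v) - v \<bullet> (A *v v)"])
      fix t :: real
      have "u + t *\<^sub>R v \<in> W" using that uW less.prems by (simp add: subspace_add subspace_scale)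
      from bound[OF this]
      have ineq: "(u + t *\<^sub>R v) \<bullet> (A *v (u + t *\<^sub>R v)) \<le> \<mu> * ((u + t *\<^sub>R v) \<bullet> (u + t *\<^sub>R v))" .
      moreover have E1: "(u + t *\<^sub>R v) \<bullet> (A *v (u + t *\<^sub>R v)) = \<mu> + 2 * t * (v \<bullet> (A *v u)) + t^2 * (v \<bullet> (A *v v))"
        using symi[of u v]
        by (simp add: \<mu>_def matrix_vector_right_distrib matrix_vector_mult_scaleR inner_add_left inner_add_right power2_eq_square inner_commute) (simp add: algebra_simps)
      moreover have E2: "(u + t *\<^sub>R v) \<bullet> (u + t *\<^sub>R v) = 1 + t^2 * (v \<bullet> v)"
        using uu that(2) by (simp add: inner_add_left inner_add_right power2_eq_square inner_commute)
      show "2 * t * (v \<bullet> (A *v u)) \<le> t^2 * (\<mu> * (v \<bullet> v) - v \<bullet> (A *v v))"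
        using ineq unfolding E1 E2 by (simp add: field_simps power2_eq_square)
    qed
    have eig: "A *v u = \<mu> *\<^sub>R u"
    proof -
      define v where "v = A *v u - \<mu> *\<^sub>R u"
      have vW: "v \<in> W" using uW Ainv less.prems by (simp add: v_def subspace_diff subspace_scale)
      have vu: "v \<bullet> u = 0" using uu symi[of u u] by (simp add: v_def \<mu>_def inner_diff_left inner_diff_right inner_commute)
      have "v \<bullet> v = v \<bullet> (A *v u) - \<mu> * (v \<bullet> u)" by (simp add: v_def inner_diff_right)
      also have "\<dots> = 0" using orth0[OF vW vu] vu by simp
      finally show ?thesis by (simp add: v_def)
    qed
    define W' where "W' = W \<inter> {y. orthogonal u y}"
    have sW': "subspace W'" unfolding W'_def
      by (intro subspace_inter less.prems subspace_orthogonal_to_vector)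
    have iW': "\<forall>y\<in>W'. A *v y \<in> W'"
    proof
      fix y assume "y \<in> W'"
      hence "y \<in> W" "u \<bullet> y = 0" by (auto simp: W'_def orthogonal_def)
      moreover have "u \<bullet> (A *v y) = (A *v u) \<bullet> y" by (rule symi)
      ultimately show "A *v y \<in> W'" using Ainv eig by (auto simp: W'_def orthogonal_def)
    qed
    have "u \<notin> W'" using uu by (auto simp: W'_def orthogonal_def)
    hence "W' \<subset> W" using uW by (auto simp: W'_def)
    hence "span W' \<subset> span W" using sW' less.prems(1) span_eq_iff by metis
    hence "dim W' < dim W" by (rule dim_psubset)
    from less.hyps[OF this sW' iW'] obtain B' where B':
      "B' \<subseteq> W'" "finite B'" "pairwise orthogonal B'"
      "\<forall>u\<in>B'. norm u = 1 \<and> A *v u = (u \<bullet> (A *v u)) *\<^sub>R u" "span B' = W'" by blast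
    show ?thesis
    proof (intro exI[of _ "insert u B'"] conjI)
      show "insert u B' \<subseteq> W" using B'(1) uW by (auto simp: W'_def)
      show "finite (insert u B')" using B'(2) by simp
      show "pairwise orthogonal (insert u B')"
        using B'(1,3) unfolding pairwise_insert
        by (auto simp: W'_def orthogonal_commute)
      show "\<forall>v\<in>insert u B'. norm v = 1 \<and> A *v v = (v \<bullet> (A *v v)) *\<^sub>R v"
        using B'(4) nu eig by (simp add: \<mu>_def)
      show "span (insert u B') = W"
      proof
        show "span (insert u B') \<subseteq> W"
          using B'(1) uW less.prems by (intro span_minimal) (auto simp: W'_def)
        show "W \<subseteq> span (insert u B')"
        proof
          fix y assume yW: "y \<in> W"
          define y' where "y' = y - (u \<bullet> y) *\<^sub>R u"
          have "y' \<in> W'" using yW uW uu less.prems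
            by (simp add: W'_def y'_def orthogonal_def inner_diff_right subspace_diff subspace_scale)
          hence "y' \<in> span (insert u B')" using B'(5) span_mono[of B' "insert u B'"] by auto
          moreover have "u \<in> span (insert u B')" by (simp add: span_base)
          ultimately have "y' + (u \<bullet> y) *\<^sub>R u \<in> span (insert u B')"
            by (intro span_add span_scale)
          thus "y \<in> span (insert u B')" by (simp add: y'_def)
        qed
      qed
    qed
  qed
qed


lemma sorted_last_Max:
  fixes xs :: "real list"
  assumes "sorted xs" "xs \<noteq> []"
  shows "last xs = Max (set xs)"
proof -
  have eq: "xs = butlast xs @ [last xs]" using assms(2) by simp
  have "\<forall>x\<in>set xs. x \<le> last xs"
    using assms(1) eq sorted_append[of "butlast xs" "[last xs]"] by (metis Un_iff empty_iff empty_set insert_iff list.set(2) order_refl set_append)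
  thus ?thesis using assms(2) by (intro Max_eqI[symmetric]) auto
qed

lemma rev_sorted_second:
  fixes M :: "real multiset"
  assumes "M \<noteq> {#}" "\<forall>x\<in>#M. x \<le> a"
  shows "rev (sorted_list_of_multiset (add_mset a M)) ! 1 = Max (set_mset M)"
proof -
  have "sorted_list_of_multiset (add_mset a M) = sorted_list_of_multiset M @ [a]"
    using assms(2) by (simp add: sorted_insort_is_snoc)
  hence "rev (sorted_list_of_multiset (add_mset a M)) ! 1 = rev (sorted_list_of_multiset M) ! 0"
    by simp
  also have "\<dots> = last (sorted_list_of_multiset M)"
  proof -
    have ne: "rev (sorted_list_of_multiset M) \<noteq> []" using assms(1)
      by (metis Nil_is_rev_conv mset.simps(1) mset_sorted_list_of_multiset)
    show ?thesis using hd_conv_nth[OF ne] hd_rev[of "sorted_list_of_multiset M"] by simp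
  qed
  also have "\<dots> = Max (set_mset M)"
  proof -
    have ne: "sorted_list_of_multiset M \<noteq> []" using assms(1)
      by (metis mset.simps(1) mset_sorted_list_of_multiset)
    show ?thesis by (subst sorted_last_Max[OF _ ne]) auto
  qed
  finally show ?thesis .
qed

lemma orthonormal_expand:
  fixes B :: "'a::euclidean_space set"
  assumes "finite B" "pairwise orthogonal B" "\<forall>u\<in>B. norm u = 1" "y \<in> span B"
  shows "y = (\<Sum>u\<in>B. (u \<bullet> y) *\<^sub>R u)"
proof -
  define z where "z = y - (\<Sum>u\<in>B. (u \<bullet> y) *\<^sub>R u)"
  have zs: "z \<in> span B" using assms(4) by (simp add: z_def span_diff span_sum span_scale span_base)
  have "v \<bullet> z = 0" if "v \<in> B" for v
  proof -
    have "v \<bullet> (\<Sum>u\<in>B. (u \<bullet> y) *\<^sub>R u) = (\<Sum>u\<in>B. (u \<bullet> y) * (v \<bullet> u))"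
      by (simp add: inner_sum_right)
    also have "\<dots> = (\<Sum>u\<in>B. if u = v then v \<bullet> y else 0)"
      using assms(2,3) that by (intro sum.cong) (auto simp: pairwise_def orthogonal_def norm_eq_1)
    also have "\<dots> = v \<bullet> y" using assms(1) that by simp
    finally show ?thesis by (simp add: z_def inner_diff_right)
  qed
  hence "orthogonal z z" using zs
    by (intro orthogonal_to_span[of z B z]) (auto simp: orthogonal_def inner_commute)
  hence "z \<bullet> z = 0" by (simp add: orthogonal_def)
  thus ?thesis by (simp add: z_def)
qed



lemma set_mset_sum_single: "finite A \<Longrightarrow> set_mset (\<Sum>k\<in>A. {#f k#}) = f ` A"
  by (induction A rule: finite_induct) auto

locale rchain =
  fixes E :: "('n::finite \<times> 'n) set" and \<pi> :: "'n \<Rightarrow> real" and P :: "real^'n^'n"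
  assumes card2: "CARD('n) \<ge> 2"
    and symE: "\<forall>i j. (i, j) \<in> E \<longrightarrow> (j, i) \<in> E"
    and pos: "\<forall>i. \<pi> i > 0"
    and sum1: "(\<Sum>i\<in>UNIV. \<pi> i) = 1"
    and feas: "feasible_P E \<pi> P"
begin

definition sq :: "'n \<Rightarrow> real" where "sq i = sqrt (\<pi> i)"
definition S :: "real^'n^'n" where "S = (\<chi> i j. sq i * P$i$j / sq j)"
definition s :: "real^'n" where "s = (\<chi> i. sq i)"

lemma sqpos: "sq i > 0" using pos by (simp add: sq_def)
lemma pinz: "\<pi> i \<noteq> 0" using pos by (metis less_irrefl)
lemma sqnz: "sq i \<noteq> 0" using sqpos[of i] by simp
lemma sq2: "sq i * sq i = \<pi> i" using pos by (simp add: sq_def less_imp_le)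

lemma Pnn: "P$i$j \<ge> 0" using feas by (simp add: feasible_P_def)
lemma Prow: "(\<Sum>j\<in>UNIV. P$i$j) = 1" using feas by (simp add: feasible_P_def)
lemma Prev: "\<pi> i * P$i$j = \<pi> j * P$j$i"
proof (cases "(i, j) \<in> E")
  case True then show ?thesis using feas unfolding feasible_P_def by blast
next
  case False
  hence "(j, i) \<notin> E" using symE by blast
  then show ?thesis using False feas by (simp add: feasible_P_def)
qed

lemma Pcol: "(\<Sum>i\<in>UNIV. \<pi> i * P$i$j) = \<pi> j"
proof -
  have "(\<Sum>i\<in>UNIV. \<pi> i * P$i$j) = (\<Sum>i\<in>UNIV. \<pi> j * P$j$i)" by (simp add: Prev)
  also have "\<dots> = \<pi> j" by (simp add: sum_distrib_left[symmetric] Prow)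
  finally show ?thesis .
qed

lemma S_alt: "S$i$j = \<pi> i * P$i$j / (sq i * sq j)"
  using sqpos[of i] sqpos[of j] sq2[of i] by (simp add: S_def field_simps)

lemma Ssym: "S$i$j = S$j$i"
  by (simp add: S_alt Prev mult.commute)

lemma Ss: "S *v s = s"
proof -
  have "(S *v s)$i = s$i" for i
  proof -
    have "(S *v s)$i = (\<Sum>j\<in>UNIV. sq i * P$i$j)"
      by (simp add: S_def s_def matrix_vector_mult_def sqnz)
    also have "\<dots> = sq i" by (simp add: sum_distrib_left[symmetric] Prow)
    finally show ?thesis by (simp add: s_def)
  qed
  thus ?thesis by (simp add: vec_eq_iff)
qed

lemma ss: "s \<bullet> s = 1"
  by (simp add: s_def inner_vec_def sq2 sum1)

lemma quad_S: "x \<bullet> (S *v y) = (\<Sum>i\<in>UNIV. \<Sum>j\<in>UNIV. \<pi> i * P$i$j * (x$i / sq i) * (y$j / sq j))"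
proof -
  have "x \<bullet> (S *v y) = (\<Sum>i\<in>UNIV. x$i * (\<Sum>j\<in>UNIV. S$i$j * y$j))"
    by (simp add: inner_vec_def matrix_vector_mult_def)
  also have "\<dots> = (\<Sum>i\<in>UNIV. \<Sum>j\<in>UNIV. \<pi> i * P$i$j * (x$i / sq i) * (y$j / sq j))"
    by (simp add: sum_distrib_left S_alt field_simps)
  finally show ?thesis .
qed

lemma rayleigh_bound: "\<bar>x \<bullet> (S *v x)\<bar> \<le> x \<bullet> x"
proof -
  define g where "g i = x$i / sq i" for i
  have "\<bar>x \<bullet> (S *v x)\<bar> = \<bar>\<Sum>i\<in>UNIV. \<Sum>j\<in>UNIV. \<pi> i * P$i$j * g i * g j\<bar>"
    by (simp add: quad_S g_def)
  also have "\<dots> \<le> (\<Sum>i\<in>UNIV. \<Sum>j\<in>UNIV. \<bar>\<pi> i * P$i$j * g i * g j\<bar>)"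
    by (rule order_trans[OF sum_abs]) (intro sum_mono sum_abs)
  also have "\<dots> \<le> (\<Sum>i\<in>UNIV. \<Sum>j\<in>UNIV. \<pi> i * P$i$j * ((g i)^2 + (g j)^2) / 2)"
  proof (intro sum_mono)
    fix i j
    have nn: "\<pi> i * P$i$j \<ge> 0" using pos Pnn[of i j] by (simp add: less_imp_le)
    have "0 \<le> (\<bar>g i\<bar> - \<bar>g j\<bar>)^2" by simp
    hence "2 * (\<bar>g i\<bar> * \<bar>g j\<bar>) \<le> (g i)^2 + (g j)^2"
      unfolding power2_diff by (simp add: power2_abs)
    hence "\<bar>g i * g j\<bar> \<le> ((g i)^2 + (g j)^2) / 2" by (simp add: abs_mult)
    hence "\<pi> i * P$i$j * \<bar>g i * g j\<bar> \<le> \<pi> i * P$i$j * (((g i)^2 + (g j)^2) / 2)"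
      using nn by (rule mult_left_mono)
    thus "\<bar>\<pi> i * P$i$j * g i * g j\<bar> \<le> \<pi> i * P$i$j * ((g i)^2 + (g j)^2) / 2"
      using nn pos Pnn[of i j] by (simp add: abs_mult mult.assoc less_imp_le)
  qed
  also have "\<dots> = ((\<Sum>i\<in>UNIV. \<Sum>j\<in>UNIV. \<pi> i * P$i$j * (g i)^2) + (\<Sum>i\<in>UNIV. \<Sum>j\<in>UNIV. \<pi> i * P$i$j * (g j)^2)) / 2"
    by (simp add: sum.distrib sum_divide_distrib[symmetric] distrib_left add_divide_distrib)
  also have "(\<Sum>i\<in>UNIV. \<Sum>j\<in>UNIV. \<pi> i * P$i$j * (g i)^2) = (\<Sum>i\<in>UNIV. \<pi> i * (g i)^2)"
    by (simp add: sum_distrib_right[symmetric] sum_distrib_left[symmetric] Prow mult.commute mult.left_commute)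
  also have "(\<Sum>i\<in>UNIV. \<Sum>j\<in>UNIV. \<pi> i * P$i$j * (g j)^2) = (\<Sum>j\<in>UNIV. \<pi> j * (g j)^2)"
    by (subst sum.swap) (simp add: sum_distrib_right[symmetric] Pcol)
  also have "(\<Sum>i\<in>UNIV. \<pi> i * (g i)^2) = x \<bullet> x"
    using sqpos sq2 pos by (simp add: g_def inner_vec_def power2_eq_square field_simps pinz)
  finally show ?thesis by simp
qed


definition W :: "(real^'n) set" where "W = {y. orthogonal s y}"

lemma W_inv: "\<forall>x\<in>W. S *v x \<in> W"
proof
  fix x assume "x \<in> W"
  hence "s \<bullet> x = 0" by (simp add: W_def orthogonal_def)
  moreover have "s \<bullet> (S *v x) = (S *v s) \<bullet> x" by (rule sym_inner) (rule Ssym)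
  ultimately show "S *v x \<in> W" by (simp add: W_def orthogonal_def Ss)
qed

lemma W_sub: "subspace W" unfolding W_def by (rule subspace_orthogonal_to_vector)

lemma eigB: "\<exists>B'. B' \<subseteq> W \<and> finite B' \<and> pairwise orthogonal B' \<and>
        (\<forall>u\<in>B'. norm u = 1 \<and> S *v u = (u \<bullet> (S *v u)) *\<^sub>R u) \<and> span B' = W"
  by (rule spectral_subspace[OF Ssym W_sub W_inv])

lemma main_spec:
  "-1 \<le> lambda2 P \<and> lambda2 P \<le> 1 \<and>
    (\<forall>g::real^'n. (\<Sum>i\<in>UNIV. \<pi> i * g$i) = 0 \<longrightarrow>
        (\<Sum>i\<in>UNIV. \<pi> i * g$i * (P *v g)$i) \<le> lambda2 P * (\<Sum>i\<in>UNIV. \<pi> i * (g$i)^2)) \<and>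
    (\<exists>f::real^'n. (\<Sum>i\<in>UNIV. \<pi> i * f$i) = 0 \<and> (\<Sum>i\<in>UNIV. \<pi> i * (f$i)^2) = 1 \<and>
        P *v f = lambda2 P *\<^sub>R f)"
proof -
  obtain B' where B': "B' \<subseteq> W" "finite B'" "pairwise orthogonal B'"
    "\<forall>u\<in>B'. norm u = 1 \<and> S *v u = (u \<bullet> (S *v u)) *\<^sub>R u" "span B' = W"
    using eigB by blast
  have sW: "s \<notin> B'" using B'(1) ss by (auto simp: W_def orthogonal_def)
  define B where "B = insert s B'"
  have finB: "finite B" using B'(2) by (simp add: B_def)
  have orthB: "pairwise orthogonal B"
    using B'(1,3) unfolding B_def pairwise_insert
    by (auto simp: W_def orthogonal_commute)
  have ns: "norm s = 1" using ss by (simp add: norm_eq_1)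
  have unitB: "\<forall>u\<in>B. norm u = 1" using B'(4) ns by (simp add: B_def)
  have eigBB: "\<forall>u\<in>B. S *v u = (u \<bullet> (S *v u)) *\<^sub>R u" using B'(4) Ss ss by (simp add: B_def)
  have spanB: "span B = UNIV"
  proof -
    have "y \<in> span B" for y
    proof -
      define y' where "y' = y - (s \<bullet> y) *\<^sub>R s"
      have "y' \<in> W" using ss by (simp add: W_def y'_def orthogonal_def inner_diff_right)
      hence "y' \<in> span B" using B'(5) span_mono[of B' B] by (auto simp: B_def)
      moreover have "s \<in> span B" by (simp add: span_base B_def)
      ultimately have "y' + (s \<bullet> y) *\<^sub>R s \<in> span B" by (intro span_add span_scale)
      thus ?thesis by (simp add: y'_def)
    qed
    thus ?thesis by auto
  qed
  have indB: "independent B"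
    using orthB unitB by (intro pairwise_orthogonal_independent) auto
  have cardB: "card B = CARD('n)"
    using dim_span_eq_card_independent[OF indB] spanB by simp
  obtain b where bij: "bij_betw b (UNIV::'n set) B"
    using finite_same_card_bij[OF _ finB] cardB by (metis finite)
  define \<mu> where "\<mu> k = b k \<bullet> (S *v b k)" for k
  have bB: "b k \<in> B" for k using bij by (auto simp: bij_betw_def)
  have beig: "S *v b k = \<mu> k *\<^sub>R b k" for k using eigBB bB by (simp add: \<mu>_def)
  have binner: "b k \<bullet> b l = (if k = l then 1 else 0)" for k l
  proof (cases "k = l")
    case True then show ?thesis using unitB bB by (simp add: norm_eq_1)
  next
    case False
    hence "b k \<noteq> b l" using bij by (auto simp: bij_betw_def inj_on_def)
    then show ?thesis using orthB bB False by (auto simp: pairwise_def orthogonal_def)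
  qed
  define V where "V = (\<chi> i k. (b k)$i / sq i)"
  have PV: "(P ** V)$i$k = V$i$k * \<mu> k" for i k
  proof -
    have "(S *v b k)$i = sq i * (P ** V)$i$k"
      by (simp add: S_def V_def matrix_vector_mult_def matrix_matrix_mult_def sum_distrib_left field_simps sqnz)
    hence "sq i * (P ** V)$i$k = \<mu> k * (b k)$i" using beig[of k] by simp
    thus ?thesis using sqnz[of i] by (simp add: V_def field_simps)
  qed
  have detV: "det V \<noteq> 0"
  proof -
    define D where "D = (\<chi> i j. if i = j then \<pi> i else (0::real))"
    have "transpose V ** (D ** V) = mat 1"
    proof -
      have "(transpose V ** (D ** V))$k$l = (mat 1 :: real^'n^'n)$k$l" for k l
      proof -
        have DV: "(D ** V)$i$l = \<pi> i * V$i$l" for i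
        proof -
          have "(D ** V)$i$l = (\<Sum>j\<in>UNIV. (if i = j then \<pi> i else 0) * V$j$l)"
            unfolding matrix_matrix_mult_def D_def by simp
          also have "\<dots> = (\<Sum>j\<in>UNIV. if i = j then \<pi> i * V$j$l else 0)"
            by (rule sum.cong) auto
          also have "\<dots> = \<pi> i * V$i$l" by simp
          finally show ?thesis .
        qed
        have "(transpose V ** (D ** V))$k$l = (\<Sum>i\<in>UNIV. V$i$k * (\<pi> i * V$i$l))"
          unfolding matrix_matrix_mult_def[of "transpose V"] by (simp add: transpose_def DV)
        also have "\<dots> = b k \<bullet> b l"
          using sq2 by (simp add: V_def inner_vec_def field_simps sqnz pinz)
        finally show ?thesis by (simp add: binner mat_def)
      qed
      thus ?thesis by (simp add: vec_eq_iff)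
    qed
    hence "det (transpose V) * (det D * det V) = 1" by (metis det_I det_mul)
    thus ?thesis by auto
  qed
  have cp: "char_poly_vec P = (\<Prod>k\<in>UNIV. [:- \<mu> k, 1:])"
    by (rule char_poly_eigen[OF detV PV])
  have pr: "proots (char_poly_vec P) = (\<Sum>k\<in>UNIV. {#\<mu> k#})"
    unfolding cp by (subst proots_prod) auto
  have "s \<in> b ` UNIV" using bij by (simp add: bij_betw_def B_def)
  then obtain k0 where k0: "b k0 = s" by (metis imageE)
  have mu0: "\<mu> k0 = 1" using k0 Ss ss by (simp add: \<mu>_def)
  define K where "K = UNIV - {k0}"
  have bK: "k \<in> K \<Longrightarrow> b k \<in> B'" for k
    using bB[of k] k0 bij by (auto simp: K_def B_def bij_betw_def inj_on_def)
  have UK: "(UNIV::'n set) = insert k0 K" by (auto simp: K_def)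
  have Kne: "K \<noteq> {}"
  proof
    assume "K = {}"
    hence "(UNIV::'n set) = {k0}" using UK by simp
    hence "CARD('n) = card {k0}" by (simp only:)
    hence "CARD('n) = 1" by simp
    thus False using card2 by simp
  qed
  define M' where "M' = (\<Sum>k\<in>K. {#\<mu> k#})"
  have pr2: "proots (char_poly_vec P) = add_mset 1 M'"
    unfolding pr M'_def K_def by (subst sum.remove[of UNIV k0]) (simp_all add: mu0)
  have setM: "set_mset M' = \<mu> ` K" unfolding M'_def by (rule set_mset_sum_single) simp
  have mubound: "\<bar>\<mu> k\<bar> \<le> 1" for k
    using rayleigh_bound[of "b k"] binner[of k k] by (simp add: \<mu>_def)
  have M'ne: "M' \<noteq> {#}" using Kne setM by auto
  have lam: "lambda2 P = Max (\<mu> ` K)"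
    unfolding lambda2_def eigs_desc_def pr2
    using rev_sorted_second[OF M'ne, of 1] mubound setM by (auto simp: abs_le_iff)
  have finK: "finite K" by simp
  have lamin: "lambda2 P \<in> \<mu> ` K" unfolding lam using Kne by (intro Max_in) auto
  have lamge: "\<mu> k \<le> lambda2 P" if "k \<in> K" for k
    unfolding lam using that by (intro Max_ge) auto
  have part1: "-1 \<le> lambda2 P \<and> lambda2 P \<le> 1"
    using lamin mubound by (auto simp: abs_le_iff)
  have part2: "\<forall>g::real^'n. (\<Sum>i\<in>UNIV. \<pi> i * g$i) = 0 \<longrightarrow>
        (\<Sum>i\<in>UNIV. \<pi> i * g$i * (P *v g)$i) \<le> lambda2 P * (\<Sum>i\<in>UNIV. \<pi> i * (g$i)^2)"
  proof (intro allI impI)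
    fix g :: "real^'n"
    assume g0: "(\<Sum>i\<in>UNIV. \<pi> i * g$i) = 0"
    define y where "y = (\<chi> i. sq i * g$i)"
    have "s \<bullet> y = 0" using g0 sq2 by (simp add: s_def y_def inner_vec_def mult.assoc[symmetric])
    hence "y \<in> span B'" using B'(5) by (simp add: W_def orthogonal_def)
    hence yexp: "y = (\<Sum>u\<in>B'. (u \<bullet> y) *\<^sub>R u)"
      using B'(2,3,4) by (intro orthonormal_expand) auto
    have "y \<bullet> (S *v y) = (\<Sum>u\<in>B'. (u \<bullet> y) * (y \<bullet> (S *v u)))"
    proof -
      have "S *v y = (\<Sum>u\<in>B'. (u \<bullet> y) *\<^sub>R (S *v u))"
        by (subst yexp) (simp add: linear_sum[OF matrix_vector_mul_linear] matrix_vector_mult_scaleR)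
      thus ?thesis by (simp add: inner_sum_right)
    qed
    also have "\<dots> = (\<Sum>u\<in>B'. (u \<bullet> (S *v u)) * (u \<bullet> y)^2)"
    proof (rule sum.cong)
      fix u assume "u \<in> B'"
      define c where "c = u \<bullet> (S *v u)"
      have "S *v u = c *\<^sub>R u" using B'(4) \<open>u \<in> B'\<close> by (simp add: c_def)
      hence "y \<bullet> (S *v u) = c * (y \<bullet> u)" by simp
      thus "(u \<bullet> y) * (y \<bullet> (S *v u)) = (u \<bullet> (S *v u)) * (u \<bullet> y)^2"
        by (simp add: c_def power2_eq_square inner_commute)
    qed simp
    also have "\<dots> \<le> (\<Sum>u\<in>B'. lambda2 P * (u \<bullet> y)^2)"
    proof (rule sum_mono)
      fix u assume "u \<in> B'"
      hence "u \<in> B" by (simp add: B_def)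
      then obtain k where k: "b k = u" using bij by (auto simp: bij_betw_def)
      have "k \<in> K" using k \<open>u \<in> B'\<close> sW k0 by (auto simp: K_def)
      hence "u \<bullet> (S *v u) \<le> lambda2 P" using lamge k by (auto simp: \<mu>_def)
      thus "(u \<bullet> (S *v u)) * (u \<bullet> y)^2 \<le> lambda2 P * (u \<bullet> y)^2"
        by (simp add: mult_right_mono)
    qed
    also have "\<dots> = lambda2 P * (y \<bullet> y)"
    proof -
      have "y \<bullet> y = (\<Sum>u\<in>B'. (u \<bullet> y) * (y \<bullet> u))"
        by (subst (2) yexp) (simp add: inner_sum_right)
      thus ?thesis by (simp add: sum_distrib_left power2_eq_square inner_commute)
    qed
    finally have ineq: "y \<bullet> (S *v y) \<le> lambda2 P * (y \<bullet> y)" .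
    have e1: "y \<bullet> (S *v y) = (\<Sum>i\<in>UNIV. \<pi> i * g$i * (P *v g)$i)"
      unfolding quad_S
      by (simp add: y_def sqnz matrix_vector_mult_def sum_distrib_left mult.assoc mult.left_commute)
    have e2: "y \<bullet> y = (\<Sum>i\<in>UNIV. \<pi> i * (g$i)^2)"
      by (simp add: y_def inner_vec_def power2_eq_square mult.assoc mult.left_commute sq2[symmetric])
    show "(\<Sum>i\<in>UNIV. \<pi> i * g$i * (P *v g)$i) \<le> lambda2 P * (\<Sum>i\<in>UNIV. \<pi> i * (g$i)^2)"
      using ineq e1 e2 by simp
  qed
  have part3: "\<exists>f::real^'n. (\<Sum>i\<in>UNIV. \<pi> i * f$i) = 0 \<and> (\<Sum>i\<in>UNIV. \<pi> i * (f$i)^2) = 1 \<and>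
        P *v f = lambda2 P *\<^sub>R f"
  proof -
    obtain k1 where k1: "k1 \<in> K" "\<mu> k1 = lambda2 P" using lamin by auto
    define u where "u = b k1"
    have uB': "u \<in> B'" using bK k1 by (simp add: u_def)
    define f where "f = (\<chi> i. u$i / sq i)"
    have "s \<bullet> u = 0" using uB' B'(1) by (auto simp: W_def orthogonal_def)
    hence c1: "(\<Sum>i\<in>UNIV. \<pi> i * f$i) = 0"
      by (simp add: f_def s_def inner_vec_def sqnz sq2[symmetric] mult.commute)
    have "u \<bullet> u = 1" using binner[of k1 k1] by (simp add: u_def)
    hence c2: "(\<Sum>i\<in>UNIV. \<pi> i * (f$i)^2) = 1"
      using sq2 by (simp add: f_def inner_vec_def sqnz pinz field_simps power2_eq_square)
    have c3: "P *v f = lambda2 P *\<^sub>R f"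
    proof -
      have "(P *v f)$i = (lambda2 P *\<^sub>R f)$i" for i
      proof -
        have "(S *v u)$i = sq i * (P *v f)$i"
          by (simp add: S_def f_def matrix_vector_mult_def sum_distrib_left field_simps sqnz)
        moreover have "S *v u = lambda2 P *\<^sub>R u" using beig[of k1] k1 by (simp add: u_def)
        ultimately have "sq i * (P *v f)$i = lambda2 P * u$i" by simp
        thus ?thesis using sqnz[of i] by (simp add: f_def field_simps)
      qed
      thus ?thesis by (simp add: vec_eq_iff)
    qed
    show ?thesis using c1 c2 c3 by blast
  qed
  show ?thesis using part1 part2 part3 by blast
qed

end




lemma rchainI:
  fixes E :: "('n::finite \<times> 'n) set"
  assumes "CARD('n) \<ge> 2" "\<forall>i j. (i, j) \<in> E \<longrightarrow> (j, i) \<in> E" "\<forall>i. \<pi> i > 0"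
    "(\<Sum>i\<in>UNIV. \<pi> i) = 1" "feasible_P E \<pi> P"
  shows "rchain E \<pi> P"
  using assms by unfold_locales

lemma weak1:
  fixes E :: "('n::finite \<times> 'n) set" and \<Psi> :: "'n \<Rightarrow> real^'n"
  assumes rc: "rchain E \<pi> P" and emb: "feasible_emb E \<pi> w \<Psi>"
  shows "(1 - lambda2 P) * emb_obj \<pi> \<Psi> \<le> 1"
proof -
  interpret rchain E \<pi> P by (rule rc)
  have specB: "\<And>g::real^'n. (\<Sum>i\<in>UNIV. \<pi> i * g$i) = 0 \<Longrightarrow>
        (\<Sum>i\<in>UNIV. \<pi> i * g$i * (P *v g)$i) \<le> lambda2 P * (\<Sum>i\<in>UNIV. \<pi> i * (g$i)^2)"
    using main_spec by blast
  define V where "V = emb_obj \<pi> \<Psi>"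
  define X where "X = (\<Sum>i\<in>UNIV. \<Sum>j\<in>UNIV. \<pi> i * P$i$j * (\<Psi> i \<bullet> \<Psi> j))"
  have mean0: "(\<Sum>k\<in>UNIV. \<pi> k *\<^sub>R \<Psi> k) = 0" using emb by (simp add: feasible_emb_def)
  have XV: "X \<le> lambda2 P * V"
  proof -
    have "(\<Sum>c\<in>UNIV. \<Sum>i\<in>UNIV. \<pi> i * (\<Psi> i $ c) * (P *v (\<chi> i. \<Psi> i $ c))$i)
        \<le> (\<Sum>c\<in>UNIV. lambda2 P * (\<Sum>i\<in>UNIV. \<pi> i * (\<Psi> i $ c)^2))"
    proof (rule sum_mono)
      fix c
      have "(\<Sum>i\<in>UNIV. \<pi> i * (\<chi> i. \<Psi> i $ c)$i) = (\<Sum>k\<in>UNIV. \<pi> k *\<^sub>R \<Psi> k) $ c"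
        by (simp add: sum_component)
      hence "(\<Sum>i\<in>UNIV. \<pi> i * (\<chi> i. \<Psi> i $ c)$i) = 0" using mean0 by simp
      from specB[OF this]
      show "(\<Sum>i\<in>UNIV. \<pi> i * (\<Psi> i $ c) * (P *v (\<chi> i. \<Psi> i $ c))$i)
          \<le> lambda2 P * (\<Sum>i\<in>UNIV. \<pi> i * (\<Psi> i $ c)^2)" by simp
    qed
    moreover have "(\<Sum>c\<in>UNIV. \<Sum>i\<in>UNIV. \<pi> i * (\<Psi> i $ c) * (P *v (\<chi> i. \<Psi> i $ c))$i) = X"
    proof -
      have "(\<Sum>c\<in>UNIV. \<Sum>i\<in>UNIV. \<pi> i * (\<Psi> i $ c) * (P *v (\<chi> i. \<Psi> i $ c))$i)
          = (\<Sum>c\<in>UNIV. \<Sum>i\<in>UNIV. \<Sum>j\<in>UNIV. \<pi> i * P$i$j * (\<Psi> i $ c * \<Psi> j $ c))"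
        by (simp add: matrix_vector_mult_def sum_distrib_left mult_ac)
      also have "\<dots> = (\<Sum>i\<in>UNIV. \<Sum>c\<in>UNIV. \<Sum>j\<in>UNIV. \<pi> i * P$i$j * (\<Psi> i $ c * \<Psi> j $ c))"
        by (rule sum.swap)
      also have "\<dots> = (\<Sum>i\<in>UNIV. \<Sum>j\<in>UNIV. \<Sum>c\<in>UNIV. \<pi> i * P$i$j * (\<Psi> i $ c * \<Psi> j $ c))"
        by (rule sum.cong[OF refl], rule sum.swap)
      also have "\<dots> = X"
        by (simp add: X_def inner_vec_def sum_distrib_left)
      finally show ?thesis .
    qed
    moreover have "(\<Sum>c\<in>UNIV. lambda2 P * (\<Sum>i\<in>UNIV. \<pi> i * (\<Psi> i $ c)^2)) = lambda2 P * V"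
    proof -
      have "(\<Sum>c\<in>UNIV. \<Sum>i\<in>UNIV. \<pi> i * (\<Psi> i $ c)^2) = (\<Sum>i\<in>UNIV. \<pi> i * (norm (\<Psi> i))^2)"
      proof -
        have nn: "(norm (\<Psi> i))^2 = (\<Sum>c\<in>UNIV. (\<Psi> i $ c)^2)" for i
          unfolding power2_norm_eq_inner inner_vec_def by (simp add: power2_eq_square)
        show ?thesis unfolding nn by (subst sum.swap) (simp add: sum_distrib_left)
      qed
      thus ?thesis by (simp add: V_def emb_obj_def sum_distrib_left[symmetric])
    qed
    ultimately show ?thesis by simp
  qed
  have rowV: "(\<Sum>i\<in>UNIV. \<Sum>j\<in>UNIV. \<pi> i * P$i$j * a i) = (\<Sum>i\<in>UNIV. \<pi> i * a i)" for a :: "'n \<Rightarrow> real"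
    by (simp add: sum_distrib_right[symmetric] sum_distrib_left[symmetric] Prow mult_ac)
  have colV: "(\<Sum>i\<in>UNIV. \<Sum>j\<in>UNIV. \<pi> i * P$i$j * a j) = (\<Sum>j\<in>UNIV. \<pi> j * a j)" for a :: "'n \<Rightarrow> real"
    by (subst sum.swap) (simp add: sum_distrib_right[symmetric] Pcol)
  have Dform: "(\<Sum>i\<in>UNIV. \<Sum>j\<in>UNIV. \<pi> i * P$i$j * (norm (\<Psi> i - \<Psi> j))^2) = 2 * V - 2 * X"
  proof -
    have "(\<Sum>i\<in>UNIV. \<Sum>j\<in>UNIV. \<pi> i * P$i$j * (norm (\<Psi> i - \<Psi> j))^2)
        = (\<Sum>i\<in>UNIV. \<Sum>j\<in>UNIV. \<pi> i * P$i$j * (norm (\<Psi> i))^2 + \<pi> i * P$i$j * (norm (\<Psi> j))^2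
             - 2 * (\<pi> i * P$i$j * (\<Psi> i \<bullet> \<Psi> j)))"
      by (intro sum.cong refl)
         (simp add: power2_norm_eq_inner inner_diff_left inner_diff_right inner_commute algebra_simps)
    also have "\<dots> = 2 * V - 2 * X"
      by (simp add: sum.distrib sum_subtractf sum_distrib_left[symmetric] rowV colV V_def X_def emb_obj_def)
    finally show ?thesis .
  qed
  have Wb: "(\<Sum>i\<in>UNIV. \<Sum>j\<in>UNIV. \<pi> i * P$i$j * (norm (\<Psi> i - \<Psi> j))^2) \<le> 2"
  proof -
    have "(\<Sum>i\<in>UNIV. \<Sum>j\<in>UNIV. \<pi> i * P$i$j * (norm (\<Psi> i - \<Psi> j))^2)
        \<le> (\<Sum>i\<in>UNIV. \<Sum>j\<in>UNIV. \<pi> i * P$i$j * w$i + \<pi> i * P$i$j * w$j)"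
    proof (intro sum_mono)
      fix i j
      show "\<pi> i * P$i$j * (norm (\<Psi> i - \<Psi> j))^2 \<le> \<pi> i * P$i$j * w$i + \<pi> i * P$i$j * w$j"
      proof (cases "(i, j) \<in> E")
        case True
        hence "(norm (\<Psi> i - \<Psi> j))^2 \<le> w$i + w$j" using emb by (simp add: feasible_emb_def)
        moreover have "\<pi> i * P$i$j \<ge> 0" using pos Pnn[of i j] by (simp add: less_imp_le)
        ultimately show ?thesis by (metis distrib_left mult_left_mono)
      next
        case False
        hence "P$i$j = 0" using feas by (simp add: feasible_P_def)
        thus ?thesis by simp
      qed
    qed
    also have "\<dots> = 2"
      using emb by (simp add: sum.distrib rowV colV feasible_emb_def)
    finally show ?thesis .
  qed
  show ?thesis using XV Dform Wb by (simp add: V_def[symmetric] algebra_simps)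
qed



lemma id_feasible:
  assumes "\<forall>i. (i, i) \<in> E"
  shows "feasible_P E \<pi> (mat 1)"
proof -
  have "(\<Sum>j\<in>UNIV. (mat 1 :: real^'n^'n) $ i $ j) = 1" for i
    by (simp add: mat_def)
  thus ?thesis using assms unfolding feasible_P_def by (auto simp: mat_def)
qed

locale setting =
  fixes E :: "('n::finite \<times> 'n) set" and \<pi> :: "'n \<Rightarrow> real"
  assumes card2: "CARD('n) \<ge> 2"
    and symE: "\<forall>i j. (i, j) \<in> E \<longrightarrow> (j, i) \<in> E"
    and loops: "\<forall>i. (i, i) \<in> E"
    and pos: "\<forall>i. \<pi> i > 0"
    and sum1: "(\<Sum>i\<in>UNIV. \<pi> i) = 1"
begin

lemma rc: "feasible_P E \<pi> P \<Longrightarrow> rchain E \<pi> P"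
  by (rule rchainI[OF card2 symE pos sum1])

definition Lam where "Lam = {lambda2 P |P. feasible_P E \<pi> P}"

lemma spec: "feasible_P E \<pi> P \<Longrightarrow> -1 \<le> lambda2 P \<and> lambda2 P \<le> 1 \<and>
    (\<forall>g::real^'n. (\<Sum>i\<in>UNIV. \<pi> i * g$i) = 0 \<longrightarrow>
        (\<Sum>i\<in>UNIV. \<pi> i * g$i * (P *v g)$i) \<le> lambda2 P * (\<Sum>i\<in>UNIV. \<pi> i * (g$i)^2)) \<and>
    (\<exists>f::real^'n. (\<Sum>i\<in>UNIV. \<pi> i * f$i) = 0 \<and> (\<Sum>i\<in>UNIV. \<pi> i * (f$i)^2) = 1 \<and>
        P *v f = lambda2 P *\<^sub>R f)"
  using rchain.main_spec[OF rc] by blast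

lemma Lam_ne: "Lam \<noteq> {}" using id_feasible[OF loops] by (auto simp: Lam_def)
lemma Lam_bdd: "bdd_below Lam"
  unfolding Lam_def bdd_below_def using spec by blast

lemma L_le: "feasible_P E \<pi> P \<Longrightarrow> lambda2_star E \<pi> \<le> lambda2 P"
  unfolding lambda2_star_def using Lam_bdd by (intro cInf_lower) (auto simp: Lam_def)

lemma L_bounds: "-1 \<le> lambda2_star E \<pi> \<and> lambda2_star E \<pi> \<le> 1"
proof
  show "-1 \<le> lambda2_star E \<pi>" unfolding lambda2_star_def
    using Lam_ne spec by (intro cInf_greatest) (auto simp: Lam_def)
  show "lambda2_star E \<pi> \<le> 1"
    using L_le[OF id_feasible[OF loops]] spec[OF id_feasible[OF loops]] by linarith
qed

lemma obj_nn: "emb_obj \<pi> \<Psi> \<ge> 0"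
  unfolding emb_obj_def using pos by (intro sum_nonneg) (simp add: less_imp_le)

lemma weak2:
  assumes "feasible_emb E \<pi> w \<Psi>"
  shows "ereal (emb_obj \<pi> \<Psi>) \<le> tau2_star E \<pi>"
proof -
  define L where "L = lambda2_star E \<pi>"
  define V where "V = emb_obj \<pi> \<Psi>"
  have V0: "V \<ge> 0" by (simp add: V_def obj_nn)
  show ?thesis
  proof (cases "L = 1")
    case True
    thus ?thesis by (simp add: tau2_star_def L_def)
  next
    case False
    hence Llt: "L < 1" using L_bounds by (simp add: L_def)
    have "V * (1 - L) \<le> 1"
    proof (cases "V = 0")
      case True thus ?thesis by simp
    next
      case False
      hence Vp: "V > 0" using V0 by simp
      have "1 - 1 / V \<le> lambda2 P" if "feasible_P E \<pi> P" for P
      proof -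
        have "(1 - lambda2 P) * V \<le> 1" using weak1[OF rc[OF that] assms] by (simp add: V_def)
        thus ?thesis using Vp by (simp add: field_simps)
      qed
      hence "1 - 1 / V \<le> L" unfolding L_def lambda2_star_def
        using Lam_ne by (intro cInf_greatest) (auto simp: Lam_def)
      thus ?thesis using Vp by (simp add: field_simps)
    qed
    hence "V \<le> 1 / (1 - L)" using Llt by (simp add: field_simps)
    moreover have "tau2_star E \<pi> = ereal (1 / (1 - L))"
      using Llt by (simp add: tau2_star_def L_def divide_inverse)
    ultimately show ?thesis by (simp add: V_def)
  qed
qed

end

lemma compress:
  fixes \<Theta> :: "'n::finite \<Rightarrow> 'a::euclidean_space"
  shows "\<exists>\<Phi>::'n \<Rightarrow> real^'n. (\<forall>i j. norm (\<Phi> i - \<Phi> j) = norm (\<Theta> i - \<Theta> j)) \<and>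
     (\<forall>i. norm (\<Phi> i) = norm (\<Theta> i)) \<and>
     (\<forall>c. (\<Sum>k\<in>UNIV. c k *\<^sub>R \<Theta> k) = 0 \<longrightarrow> (\<Sum>k\<in>UNIV. c k *\<^sub>R \<Phi> k) = 0)"
proof -
  define T where "T = span (range \<Theta>)"
  have "dim T \<le> card (range \<Theta>)" unfolding T_def by (rule dim_le_card) auto
  also have "\<dots> \<le> CARD('n)" by (rule card_image_le) simp
  finally have "dim T \<le> dim (UNIV :: (real^'n) set)" by simp
  then obtain U :: "(real^'n) set" where U: "subspace U" "dim U = dim T"
    using choose_subspace_of_subspace[of "dim T" "UNIV :: (real^'n) set"] by metis
  obtain f where f: "linear f" "f ` T = U" "\<And>x. x \<in> T \<Longrightarrow> norm (f x) = norm x"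
    using isometry_subspaces[of T U] U by (metis T_def subspace_span)
  define \<Phi> where "\<Phi> k = f (\<Theta> k)" for k
  have inT: "\<Theta> k \<in> T" for k by (simp add: T_def span_base)
  show ?thesis
  proof (intro exI[of _ \<Phi>] conjI allI impI)
    fix i j
    have "\<Phi> i - \<Phi> j = f (\<Theta> i - \<Theta> j)" by (simp add: \<Phi>_def linear_diff[OF f(1)])
    moreover have "\<Theta> i - \<Theta> j \<in> T" using inT by (simp add: T_def span_diff)
    ultimately show "norm (\<Phi> i - \<Phi> j) = norm (\<Theta> i - \<Theta> j)" using f(3) by simp
  next
    fix i show "norm (\<Phi> i) = norm (\<Theta> i)" using f(3) inT by (simp add: \<Phi>_def)
  next
    fix c :: "'n \<Rightarrow> real" assume "(\<Sum>k\<in>UNIV. c k *\<^sub>R \<Theta> k) = 0"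
    hence "f (\<Sum>k\<in>UNIV. c k *\<^sub>R \<Theta> k) = 0" using linear_0[OF f(1)] by simp
    thus "(\<Sum>k\<in>UNIV. c k *\<^sub>R \<Phi> k) = 0"
      by (simp add: \<Phi>_def linear_sum[OF f(1)] linear_scale[OF f(1)])
  qed
qed



definition dd :: "('n \<Rightarrow> real^'n) \<Rightarrow> 'n \<Rightarrow> 'n \<Rightarrow> real" where
  "dd \<Psi> i j = (norm (\<Psi> i - \<Psi> j))^2"

lemma sum_pairs: "(\<Sum>p\<in>UNIV. g p) = (\<Sum>i\<in>UNIV. \<Sum>j\<in>UNIV. g (i, j))"
  for g :: "('n::finite \<times> 'n) \<Rightarrow> real"
  by (simp add: sum.cartesian_product UNIV_Times_UNIV[symmetric] del: UNIV_Times_UNIV)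

lemma lin_nonneg:
  fixes \<alpha> \<beta> \<gamma> :: real
  assumes "\<And>s. s \<ge> 0 \<Longrightarrow> \<gamma> \<le> \<alpha> + s * \<beta>"
  shows "\<beta> \<ge> 0"
proof (rule ccontr)
  assume "\<not> \<beta> \<ge> 0"
  hence b: "\<beta> < 0" by simp
  define s where "s = (\<bar>\<alpha>\<bar> + \<bar>\<gamma>\<bar> + 1) / (- \<beta>)"
  have "- \<beta> > 0" using b by simp
  hence "s \<ge> 0" unfolding s_def by (intro divide_nonneg_pos) auto
  hence "\<gamma> \<le> \<alpha> + s * \<beta>" by (rule assms)
  moreover have "s * \<beta> = - (\<bar>\<alpha>\<bar> + \<bar>\<gamma>\<bar> + 1)" using b by (simp add: s_def)
  ultimately show False by linarith
qed

lemma lin_zero: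
  fixes \<alpha> \<beta> \<gamma> :: real
  assumes "\<And>s. \<gamma> \<le> \<alpha> + s * \<beta>"
  shows "\<beta> = 0"
proof -
  have "\<beta> \<ge> 0" using assms by (intro lin_nonneg[of \<gamma> \<alpha>]) auto
  moreover have "- \<beta> \<ge> 0" using assms[of "- _"] by (intro lin_nonneg[of \<gamma> \<alpha>]) (metis minus_mult_commute mult_minus_right)
  ultimately show ?thesis by simp
qed

context setting
begin

definition Kset :: "((real^('n \<times> 'n)) \<times> real) set" where
  "Kset = {x. \<exists>(\<Psi>::'n \<Rightarrow> real^'n) (w::real^'n). (\<Sum>k\<in>UNIV. \<pi> k *\<^sub>R \<Psi> k) = 0 \<and> emb_obj \<pi> \<Psi> = 1 \<and>
     (\<forall>i j. (i, j) \<in> E \<longrightarrow> dd \<Psi> i j - w$i - w$j \<le> (fst x) $ (i, j)) \<and>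
     (\<Sum>i\<in>UNIV. \<pi> i * w$i) \<le> snd x}"

definition zof :: "('n \<Rightarrow> real^'n) \<Rightarrow> real^'n \<Rightarrow> real^('n \<times> 'n)" where
  "zof \<Psi> w = (\<chi> p. if p \<in> E then dd \<Psi> (fst p) (snd p) - w$(fst p) - w$(snd p) else 0)"

lemma memK:
  assumes "(\<Sum>k\<in>UNIV. \<pi> k *\<^sub>R \<Psi> k) = 0" "emb_obj \<pi> \<Psi> = 1" "\<forall>p\<in>E. y$p \<ge> 0" "s \<ge> 0"
  shows "(zof \<Psi> w + y, (\<Sum>i\<in>UNIV. \<pi> i * w$i) + s) \<in> Kset"
  unfolding Kset_def using assms by (auto simp: zof_def intro!: exI[of _ \<Psi>] exI[of _ w])

lemma Kconvex: "convex Kset"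
  unfolding convex_def
proof (intro ballI allI impI)
  fix x1 x2 :: "(real^('n \<times> 'n)) \<times> real" and u v :: real
  assume x1: "x1 \<in> Kset" and x2: "x2 \<in> Kset" and uv: "0 \<le> u" "0 \<le> v" "u + v = 1"
  obtain \<Psi>1 w1 where A1: "(\<Sum>k\<in>UNIV. \<pi> k *\<^sub>R \<Psi>1 k) = 0" "emb_obj \<pi> \<Psi>1 = 1"
     "\<forall>i j. (i, j) \<in> E \<longrightarrow> dd \<Psi>1 i j - w1$i - w1$j \<le> (fst x1) $ (i, j)"
     "(\<Sum>i\<in>UNIV. \<pi> i * w1$i) \<le> snd x1" using x1 unfolding Kset_def by blast
  obtain \<Psi>2 w2 where A2: "(\<Sum>k\<in>UNIV. \<pi> k *\<^sub>R \<Psi>2 k) = 0" "emb_obj \<pi> \<Psi>2 = 1"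
     "\<forall>i j. (i, j) \<in> E \<longrightarrow> dd \<Psi>2 i j - w2$i - w2$j \<le> (fst x2) $ (i, j)"
     "(\<Sum>i\<in>UNIV. \<pi> i * w2$i) \<le> snd x2" using x2 unfolding Kset_def by blast
  define \<Theta> where "\<Theta> k = (sqrt u *\<^sub>R \<Psi>1 k, sqrt v *\<^sub>R \<Psi>2 k)" for k
  have su: "sqrt u ^ 2 = u" "sqrt v ^ 2 = v" using uv by simp_all
  have nTd: "(norm (\<Theta> i - \<Theta> j))^2 = u * dd \<Psi>1 i j + v * dd \<Psi>2 i j" for i j
  proof -
    have "\<Theta> i - \<Theta> j = (sqrt u *\<^sub>R (\<Psi>1 i - \<Psi>1 j), sqrt v *\<^sub>R (\<Psi>2 i - \<Psi>2 j))"
      by (simp add: \<Theta>_def scaleR_diff_right)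
    thus ?thesis using su
      by (simp add: norm_Pair dd_def power_mult_distrib)
  qed
  have nT: "(norm (\<Theta> i))^2 = u * (norm (\<Psi>1 i))^2 + v * (norm (\<Psi>2 i))^2" for i
    using su by (simp add: \<Theta>_def norm_Pair power_mult_distrib)
  have mT: "(\<Sum>k\<in>UNIV. \<pi> k *\<^sub>R \<Theta> k) = 0"
  proof -
    have "fst (\<Sum>k\<in>UNIV. \<pi> k *\<^sub>R \<Theta> k) = sqrt u *\<^sub>R (\<Sum>k\<in>UNIV. \<pi> k *\<^sub>R \<Psi>1 k)"
      by (simp add: fst_sum \<Theta>_def scaleR_sum_right mult.commute)
    moreover have "snd (\<Sum>k\<in>UNIV. \<pi> k *\<^sub>R \<Theta> k) = sqrt v *\<^sub>R (\<Sum>k\<in>UNIV. \<pi> k *\<^sub>R \<Psi>2 k)"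
      by (simp add: snd_sum \<Theta>_def scaleR_sum_right mult.commute)
    ultimately show ?thesis using A1(1) A2(1) by (simp add: prod_eq_iff)
  qed
  obtain \<Phi> :: "'n \<Rightarrow> real^'n" where \<Phi>: "\<forall>i j. norm (\<Phi> i - \<Phi> j) = norm (\<Theta> i - \<Theta> j)"
    "\<forall>i. norm (\<Phi> i) = norm (\<Theta> i)"
    "\<forall>c. (\<Sum>k\<in>UNIV. c k *\<^sub>R \<Theta> k) = 0 \<longrightarrow> (\<Sum>k\<in>UNIV. c k *\<^sub>R \<Phi> k) = 0"
    using compress[of \<Theta>] by blast
  define w where "w = u *\<^sub>R w1 + v *\<^sub>R w2"
  show "u *\<^sub>R x1 + v *\<^sub>R x2 \<in> Kset"
    unfolding Kset_def
  proof (intro CollectI exI[of _ \<Phi>] exI[of _ w] conjI allI impI)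
    show "(\<Sum>k\<in>UNIV. \<pi> k *\<^sub>R \<Phi> k) = 0" using \<Phi>(3) mT by blast
    have "emb_obj \<pi> \<Phi> = (\<Sum>k\<in>UNIV. \<pi> k * (u * (norm (\<Psi>1 k))^2 + v * (norm (\<Psi>2 k))^2))"
      unfolding emb_obj_def using \<Phi>(2) nT by simp
    also have "\<dots> = u * emb_obj \<pi> \<Psi>1 + v * emb_obj \<pi> \<Psi>2"
      by (simp add: emb_obj_def sum.distrib sum_distrib_left algebra_simps)
    finally show "emb_obj \<pi> \<Phi> = 1" using A1(2) A2(2) uv by simp
  next
    fix i j assume ij: "(i, j) \<in> E"
    have "dd \<Phi> i j = u * dd \<Psi>1 i j + v * dd \<Psi>2 i j" using \<Phi>(1) nTd by (simp add: dd_def)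
    hence "dd \<Phi> i j - w$i - w$j = u * (dd \<Psi>1 i j - w1$i - w1$j) + v * (dd \<Psi>2 i j - w2$i - w2$j)"
      by (simp add: w_def algebra_simps)
    also have "\<dots> \<le> u * (fst x1) $ (i, j) + v * (fst x2) $ (i, j)"
      using A1(3) A2(3) ij uv by (intro add_mono mult_left_mono) auto
    finally show "dd \<Phi> i j - w$i - w$j \<le> (fst (u *\<^sub>R x1 + v *\<^sub>R x2)) $ (i, j)" by simp
  next
    have "(\<Sum>i\<in>UNIV. \<pi> i * w$i) = u * (\<Sum>i\<in>UNIV. \<pi> i * w1$i) + v * (\<Sum>i\<in>UNIV. \<pi> i * w2$i)"
      by (simp add: w_def sum.distrib sum_distrib_left algebra_simps)
    also have "\<dots> \<le> u * snd x1 + v * snd x2"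
      using A1(4) A2(4) uv by (intro add_mono mult_left_mono) auto
    finally show "(\<Sum>i\<in>UNIV. \<pi> i * w$i) \<le> snd (u *\<^sub>R x1 + v *\<^sub>R x2)" by simp
  qed
qed

end



context setting
begin

lemma line_emb:
  fixes f :: "real^'n"
  defines "e \<equiv> axis (undefined::'n) (1::real)"
  shows "(\<Sum>k\<in>UNIV. \<pi> k *\<^sub>R (f$k *\<^sub>R e)) = (\<Sum>k\<in>UNIV. \<pi> k * f$k) *\<^sub>R e"
    and "emb_obj \<pi> (\<lambda>k. f$k *\<^sub>R e) = (\<Sum>k\<in>UNIV. \<pi> k * (f$k)^2)"
    and "dd (\<lambda>k. f$k *\<^sub>R e) i j = (f$i - f$j)^2"
proof -
  have ne: "norm e = 1" by (simp add: e_def)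
  show "(\<Sum>k\<in>UNIV. \<pi> k *\<^sub>R (f$k *\<^sub>R e)) = (\<Sum>k\<in>UNIV. \<pi> k * f$k) *\<^sub>R e"
    by (simp add: scaleR_sum_left)
  show "emb_obj \<pi> (\<lambda>k. f$k *\<^sub>R e) = (\<Sum>k\<in>UNIV. \<pi> k * (f$k)^2)"
    by (simp add: emb_obj_def ne power_mult_distrib)
  show "dd (\<lambda>k. f$k *\<^sub>R e) i j = (f$i - f$j)^2"
    by (simp add: dd_def ne scaleR_diff_left[symmetric] power_mult_distrib del: scaleR_diff_left)
qed

lemma Azof:
  fixes A :: "real^('n \<times> 'n)"
  assumes A0: "\<And>p. p \<notin> E \<Longrightarrow> A$p = 0"
  shows "A \<bullet> zof \<Psi> w = (\<Sum>i\<in>UNIV. \<Sum>j\<in>UNIV. A$(i,j) * dd \<Psi> i j) - (\<Sum>i\<in>UNIV. \<Sum>j\<in>UNIV. A$(i,j) * (w$i + w$j))"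
proof -
  have "A \<bullet> zof \<Psi> w = (\<Sum>p\<in>UNIV. A$p * dd \<Psi> (fst p) (snd p) - A$p * (w$(fst p) + w$(snd p)))"
    unfolding inner_vec_def zof_def
    by (intro sum.cong refl) (auto simp: A0 algebra_simps)
  also have "\<dots> = (\<Sum>p\<in>UNIV. A$p * dd \<Psi> (fst p) (snd p)) - (\<Sum>p\<in>UNIV. A$p * (w$(fst p) + w$(snd p)))"
    by (rule sum_subtractf)
  finally show ?thesis by (simp only: sum_pairs fst_conv snd_conv)
qed

lemma key:
  assumes c'gt: "c' > 1 - lambda2_star E \<pi>"
  shows "\<exists>\<Psi> w. (\<Sum>k\<in>UNIV. \<pi> k *\<^sub>R \<Psi> k) = 0 \<and> emb_obj \<pi> \<Psi> = 1 \<and>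
     (\<forall>i j. (i, j) \<in> E \<longrightarrow> dd \<Psi> i j \<le> w$i + w$j) \<and> (\<Sum>i\<in>UNIV. \<pi> i * w$i) \<le> c'"
proof (rule ccontr)
  assume neg: "\<not> ?thesis"
  have notin: "(0, c') \<notin> Kset"
  proof
    assume "(0, c') \<in> Kset"
    then obtain \<Psi> w where "(\<Sum>k\<in>UNIV. \<pi> k *\<^sub>R \<Psi> k) = 0" "emb_obj \<pi> \<Psi> = 1"
      "\<forall>i j. (i, j) \<in> E \<longrightarrow> dd \<Psi> i j - w$i - w$j \<le> 0" "(\<Sum>i\<in>UNIV. \<pi> i * w$i) \<le> c'"
      unfolding Kset_def by auto
    thus False using neg by force
  qed
  define e where "e = axis (undefined::'n) (1::real)"
  obtain f0 :: "real^'n" where f0: "(\<Sum>i\<in>UNIV. \<pi> i * f0$i) = 0" "(\<Sum>i\<in>UNIV. \<pi> i * (f0$i)^2) = 1"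
    using spec[OF id_feasible[OF loops]] by blast
  define \<Psi>0 where "\<Psi>0 = (\<lambda>k. f0$k *\<^sub>R e)"
  have m0: "(\<Sum>k\<in>UNIV. \<pi> k *\<^sub>R \<Psi>0 k) = 0" using line_emb(1)[of f0] f0 by (simp add: \<Psi>0_def e_def)
  have v0: "emb_obj \<pi> \<Psi>0 = 1" using line_emb(2)[of f0] f0 by (simp add: \<Psi>0_def e_def)
  have "(zof \<Psi>0 0 + 0, (\<Sum>i\<in>UNIV. \<pi> i * (0::real^'n)$i) + 0) \<in> Kset"
    by (rule memK[OF m0 v0]) auto
  hence Kne: "Kset \<noteq> {}" by blast
  obtain a \<beta> where a: "a \<noteq> 0" "\<forall>x\<in>{(0, c')}. inner a x \<le> \<beta>" "\<forall>x\<in>Kset. inner a x \<ge> \<beta>"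
    using separating_hyperplane_sets[OF convex_singleton Kconvex _ Kne] notin by blast
  define A where "A = fst a"
  define bb where "bb = snd a"
  have aeq: "a = (A, bb)" by (simp add: A_def bb_def)
  have H: "bb * c' \<le> A \<bullet> z + bb * t" if "(z, t) \<in> Kset" for z t
    using a(2,3) that by (auto simp: aeq)
  have HK: "bb * c' \<le> A \<bullet> (zof \<Psi> w + y) + bb * ((\<Sum>i\<in>UNIV. \<pi> i * w$i) + s)"
    if "(\<Sum>k\<in>UNIV. \<pi> k *\<^sub>R \<Psi> k) = 0" "emb_obj \<pi> \<Psi> = 1" "\<forall>p\<in>E. y$p \<ge> 0" "s \<ge> 0" for \<Psi> w y s
    by (rule H[OF memK[OF that]])
  define z0 where "z0 = zof \<Psi>0 0"
  have bbnn: "bb \<ge> 0"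
  proof (rule lin_nonneg[of "bb * c'" "A \<bullet> z0"])
    fix s :: real assume "s \<ge> 0"
    from HK[OF m0 v0 _ this, of 0 0] show "bb * c' \<le> A \<bullet> z0 + s * bb" by (simp add: z0_def mult.commute)
  qed
  have Apos: "A$p \<ge> 0" if "p \<in> E" for p
  proof (rule lin_nonneg[of "bb * c'" "A \<bullet> z0"])
    fix s :: real assume s: "s \<ge> 0"
    have "\<forall>q\<in>E. (s *\<^sub>R axis p 1 :: real^('n \<times> 'n))$q \<ge> 0" using s by (auto simp: axis_def)
    from HK[OF m0 v0 this order_refl, of 0]
    show "bb * c' \<le> A \<bullet> z0 + s * A$p"
      by (simp add: z0_def inner_add_right inner_axis)
  qed
  have A0: "A$p = 0" if "p \<notin> E" for p
  proof (rule lin_zero[of "bb * c'" "A \<bullet> z0"])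
    fix s :: real
    have "\<forall>q\<in>E. (s *\<^sub>R axis p 1 :: real^('n \<times> 'n))$q \<ge> 0" using that by (auto simp: axis_def)
    from HK[OF m0 v0 this order_refl, of 0]
    show "bb * c' \<le> A \<bullet> z0 + s * A$p"
      by (simp add: z0_def inner_add_right inner_axis)
  qed
  have Ann: "A$p \<ge> 0" for p using Apos A0 by (cases "p \<in> E") auto
  define R where "R k = (\<Sum>j\<in>UNIV. A$(k,j)) + (\<Sum>i\<in>UNIV. A$(i,k))" for k
  have Rk: "bb * \<pi> k = R k" for k
  proof -
    have "bb * \<pi> k - R k = 0"
    proof (rule lin_zero[of "bb * c'" "A \<bullet> z0"])
      fix s :: real
      define w :: "real^'n" where "w = s *\<^sub>R axis k 1"
      have wi: "w$i = (if i = k then s else 0)" for i by (simp add: w_def axis_def)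
      have "(\<Sum>i\<in>UNIV. \<Sum>j\<in>UNIV. A$(i,j) * (w$i + w$j)) = s * R k"
      proof -
        have "(\<Sum>i\<in>UNIV. \<Sum>j\<in>UNIV. A$(i,j) * (w$i + w$j))
            = (\<Sum>i\<in>UNIV. \<Sum>j\<in>UNIV. A$(i,j) * w$i) + (\<Sum>i\<in>UNIV. \<Sum>j\<in>UNIV. A$(i,j) * w$j)"
          by (simp add: distrib_left sum.distrib)
        also have "(\<Sum>i\<in>UNIV. \<Sum>j\<in>UNIV. A$(i,j) * w$i) = s * (\<Sum>j\<in>UNIV. A$(k,j))"
        proof -
          have "(\<Sum>i\<in>UNIV. \<Sum>j\<in>UNIV. A$(i,j) * w$i) = (\<Sum>i\<in>UNIV. if i = k then s * (\<Sum>j\<in>UNIV. A$(i,j)) else 0)"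
            by (intro sum.cong refl) (simp add: wi sum_distrib_left mult.commute)
          thus ?thesis by simp
        qed
        also have "(\<Sum>i\<in>UNIV. \<Sum>j\<in>UNIV. A$(i,j) * w$j) = s * (\<Sum>i\<in>UNIV. A$(i,k))"
        proof -
          have "(\<Sum>i\<in>UNIV. \<Sum>j\<in>UNIV. A$(i,j) * w$j) = (\<Sum>i\<in>UNIV. s * A$(i,k))"
          proof (intro sum.cong refl)
            fix i
            have "(\<Sum>j\<in>UNIV. A$(i,j) * w$j) = (\<Sum>j\<in>UNIV. if j = k then s * A$(i,j) else 0)"
              by (intro sum.cong refl) (simp add: wi mult.commute)
            thus "(\<Sum>j\<in>UNIV. A$(i,j) * w$j) = s * A$(i,k)" by simp
          qed
          thus ?thesis by (simp add: sum_distrib_left)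
        qed
        finally show ?thesis by (simp add: R_def distrib_left)
      qed
      moreover have "(\<Sum>i\<in>UNIV. \<pi> i * w$i) = s * \<pi> k"
      proof -
        have "(\<Sum>i\<in>UNIV. \<pi> i * w$i) = (\<Sum>i\<in>UNIV. if i = k then s * \<pi> k else 0)"
          by (intro sum.cong refl) (simp add: wi)
        thus ?thesis by simp
      qed
      moreover have "A \<bullet> zof \<Psi>0 w = A \<bullet> z0 - (\<Sum>i\<in>UNIV. \<Sum>j\<in>UNIV. A$(i,j) * (w$i + w$j))"
        using Azof[OF A0, of \<Psi>0 w] Azof[OF A0, of \<Psi>0 0] by (simp add: z0_def)
      moreover have "bb * c' \<le> A \<bullet> zof \<Psi>0 w + bb * (\<Sum>i\<in>UNIV. \<pi> i * w$i)"
        using HK[OF m0 v0 _ order_refl, of 0 w] by simp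
      ultimately show "bb * c' \<le> A \<bullet> z0 + s * (bb * \<pi> k - R k)" by (simp add: algebra_simps)
    qed
    thus ?thesis by simp
  qed
  have bbpos: "bb > 0"
  proof (rule ccontr)
    assume "\<not> bb > 0"
    hence bb0: "bb = 0" using bbnn by simp
    have "A$p = 0" for p
    proof -
      obtain i j where p: "p = (i, j)" by (cases p)
      have "A$(i,j) \<le> (\<Sum>j\<in>UNIV. A$(i,j))" using Ann by (intro member_le_sum) auto
      also have "\<dots> \<le> R i" using Ann by (simp add: R_def sum_nonneg)
      also have "\<dots> = 0" using Rk[of i] bb0 by simp
      finally show ?thesis using Ann[of p] p by simp
    qed
    hence "A = 0" by (simp add: vec_eq_iff)
    thus False using a(1) bb0 aeq by (simp add: zero_prod_def)
  qed
  define P' where "P' = (\<chi> k j. (A$(k,j) + A$(j,k)) / (bb * \<pi> k))"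
  have pik: "\<pi> k > 0" for k using pos by simp
  have P'e: "bb * \<pi> k * P'$k$j = A$(k,j) + A$(j,k)" for k j
    using bbpos pik[of k] by (simp add: P'_def)
  have feasP': "feasible_P E \<pi> P'"
    unfolding feasible_P_def
  proof (intro conjI allI impI)
    fix i j
    show "0 \<le> P'$i$j" using Ann bbpos pik[of i] by (simp add: P'_def)
  next
    fix i j assume "(i, j) \<notin> E"
    moreover hence "(j, i) \<notin> E" using symE by blast
    ultimately show "P'$i$j = 0" by (simp add: P'_def A0)
  next
    fix i
    have "(\<Sum>j\<in>UNIV. P'$i$j) = (\<Sum>j\<in>UNIV. A$(i,j) + A$(j,i)) / (bb * \<pi> i)"
      by (simp add: P'_def sum_divide_distrib)
    also have "\<dots> = R i / (bb * \<pi> i)" by (simp add: R_def sum.distrib)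
    also have "\<dots> = 1" using Rk[of i] bbpos pik[of i] by (metis divide_self mult_pos_pos less_irrefl)
    finally show "(\<Sum>j\<in>UNIV. P'$i$j) = 1" .
  next
    fix i j
    have "\<pi> i * P'$i$j = (A$(i,j) + A$(j,i)) / bb" using P'e[of i j] bbpos by (simp add: field_simps)
    also have "\<dots> = \<pi> j * P'$j$i" using P'e[of j i] bbpos by (simp add: field_simps)
    finally show "\<pi> i * P'$i$j = \<pi> j * P'$j$i" .
  qed
  obtain f :: "real^'n" where f: "(\<Sum>i\<in>UNIV. \<pi> i * f$i) = 0" "(\<Sum>i\<in>UNIV. \<pi> i * (f$i)^2) = 1"
    "P' *v f = lambda2 P' *\<^sub>R f"
    using spec[OF feasP'] by blast
  define lam where "lam = lambda2 P'"
  define \<Psi>1 where "\<Psi>1 = (\<lambda>k. f$k *\<^sub>R e)"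
  have m1: "(\<Sum>k\<in>UNIV. \<pi> k *\<^sub>R \<Psi>1 k) = 0" using line_emb(1)[of f] f by (simp add: \<Psi>1_def e_def)
  have v1: "emb_obj \<pi> \<Psi>1 = 1" using line_emb(2)[of f] f by (simp add: \<Psi>1_def e_def)
  have d1: "dd \<Psi>1 i j = (f$i - f$j)^2" for i j using line_emb(3)[of f] by (simp add: \<Psi>1_def e_def)
  have "bb * c' \<le> A \<bullet> zof \<Psi>1 0" using HK[OF m1 v1 _ order_refl, of 0 0] by simp
  also have "A \<bullet> zof \<Psi>1 0 = (\<Sum>i\<in>UNIV. \<Sum>j\<in>UNIV. A$(i,j) * (f$i - f$j)^2)"
    using Azof[OF A0, of \<Psi>1 0] by (simp add: d1)
  also have "\<dots> = bb - bb * lam"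
  proof -
    have s1: "(\<Sum>i\<in>UNIV. \<Sum>j\<in>UNIV. A$(i,j) * (f$i)^2) + (\<Sum>i\<in>UNIV. \<Sum>j\<in>UNIV. A$(i,j) * (f$j)^2) = bb"
    proof -
      have "(\<Sum>i\<in>UNIV. \<Sum>j\<in>UNIV. A$(i,j) * (f$j)^2) = (\<Sum>k\<in>UNIV. (f$k)^2 * (\<Sum>i\<in>UNIV. A$(i,k)))"
        by (subst sum.swap) (simp add: sum_distrib_left mult.commute)
      moreover have "(\<Sum>i\<in>UNIV. \<Sum>j\<in>UNIV. A$(i,j) * (f$i)^2) = (\<Sum>k\<in>UNIV. (f$k)^2 * (\<Sum>j\<in>UNIV. A$(k,j)))"
        by (simp add: sum_distrib_left mult.commute)
      ultimately have "(\<Sum>i\<in>UNIV. \<Sum>j\<in>UNIV. A$(i,j) * (f$i)^2) + (\<Sum>i\<in>UNIV. \<Sum>j\<in>UNIV. A$(i,j) * (f$j)^2)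
          = (\<Sum>k\<in>UNIV. (f$k)^2 * R k)"
        by (simp add: R_def distrib_left sum.distrib)
      also have "\<dots> = bb * (\<Sum>k\<in>UNIV. \<pi> k * (f$k)^2)"
        by (simp add: Rk[symmetric] sum_distrib_left mult_ac)
      finally show ?thesis using f(2) by simp
    qed
    have s2: "2 * (\<Sum>i\<in>UNIV. \<Sum>j\<in>UNIV. A$(i,j) * (f$i * f$j)) = bb * lam"
    proof -
      have sw: "(\<Sum>i\<in>UNIV. \<Sum>j\<in>UNIV. A$(j,i) * (f$i * f$j)) = (\<Sum>i\<in>UNIV. \<Sum>j\<in>UNIV. A$(i,j) * (f$i * f$j))"
        by (subst sum.swap) (simp add: mult_ac)
      have "2 * (\<Sum>i\<in>UNIV. \<Sum>j\<in>UNIV. A$(i,j) * (f$i * f$j))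
          = (\<Sum>i\<in>UNIV. \<Sum>j\<in>UNIV. (A$(i,j) + A$(j,i)) * (f$i * f$j))"
        using sw by (simp add: distrib_right sum.distrib)
      also have "\<dots> = (\<Sum>i\<in>UNIV. \<Sum>j\<in>UNIV. bb * (\<pi> i * f$i * (P'$i$j * f$j)))"
        by (simp add: P'e[symmetric] mult_ac)
      also have "\<dots> = bb * (\<Sum>i\<in>UNIV. \<pi> i * f$i * (P' *v f)$i)"
        by (simp add: matrix_vector_mult_def sum_distrib_left)
      also have "\<dots> = bb * (lam * (\<Sum>i\<in>UNIV. \<pi> i * (f$i)^2))"
        using f(3) by (simp add: lam_def sum_distrib_left power2_eq_square mult_ac)
      finally show ?thesis using f(2) by simp
    qed
    have "(\<Sum>i\<in>UNIV. \<Sum>j\<in>UNIV. A$(i,j) * (f$i - f$j)^2)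
        = (\<Sum>i\<in>UNIV. \<Sum>j\<in>UNIV. A$(i,j) * (f$i)^2) + (\<Sum>i\<in>UNIV. \<Sum>j\<in>UNIV. A$(i,j) * (f$j)^2)
          - 2 * (\<Sum>i\<in>UNIV. \<Sum>j\<in>UNIV. A$(i,j) * (f$i * f$j))"
      by (simp add: power2_diff algebra_simps sum.distrib sum_subtractf sum_distrib_left)
    thus ?thesis using s1 s2 by simp
  qed
  finally have "bb * c' \<le> bb * (1 - lam)" by (simp add: algebra_simps)
  hence "c' \<le> 1 - lam" using bbpos by simp
  moreover have "lambda2_star E \<pi> \<le> lam" using L_le[OF feasP'] by (simp add: lam_def)
  ultimately show False using c'gt by simp
qed

end



lemma vec_nth_lambda_eq: "vec_nth (vec_lambda f) = f"
  by (rule ext) simp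

context setting
begin

lemma normalize:
  assumes m: "(\<Sum>k\<in>UNIV. \<pi> k *\<^sub>R \<Psi> k) = 0" and v: "emb_obj \<pi> \<Psi> = 1"
    and ed: "\<forall>i j. (i, j) \<in> E \<longrightarrow> dd \<Psi> i j \<le> w$i + w$j"
    and sw: "(\<Sum>i\<in>UNIV. \<pi> i * w$i) \<le> c'" and cp: "c' > 0"
  shows "\<exists>w' \<Psi>'. feasible_emb E \<pi> w' \<Psi>' \<and> emb_obj \<pi> \<Psi>' = 1 / c'"
proof -
  define \<delta> where "\<delta> = c' - (\<Sum>i\<in>UNIV. \<pi> i * w$i)"
  have d0: "\<delta> \<ge> 0" using sw by (simp add: \<delta>_def)
  define w' :: "real^'n" where "w' = (\<chi> i. (w$i + \<delta>) / c')"
  define \<Psi>' where "\<Psi>' = (\<lambda>k. (1 / sqrt c') *\<^sub>R \<Psi> k)"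
  have sc: "sqrt c' ^ 2 = c'" using cp by simp
  have ddn: "(norm (\<Psi>' i - \<Psi>' j))^2 = dd \<Psi> i j / c'" for i j
  proof -
    have "\<Psi>' i - \<Psi>' j = (1 / sqrt c') *\<^sub>R (\<Psi> i - \<Psi> j)" by (simp add: \<Psi>'_def scaleR_diff_right)
    thus ?thesis using sc cp by (simp add: dd_def power_mult_distrib power_divide)
  qed
  have nn: "(norm (\<Psi>' k))^2 = (norm (\<Psi> k))^2 / c'" for k
    using sc cp by (simp add: \<Psi>'_def power_mult_distrib power_divide)
  have feas: "feasible_emb E \<pi> w' \<Psi>'"
    unfolding feasible_emb_def
  proof (intro conjI allI impI)
    fix i j assume "(i, j) \<in> E"
    hence "dd \<Psi> i j \<le> w$i + w$j" using ed by blast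
    hence "dd \<Psi> i j / c' \<le> (w$i + \<delta>) / c' + (w$j + \<delta>) / c'"
      using d0 cp by (simp add: add_divide_distrib[symmetric] divide_right_mono)
    thus "(norm (\<Psi>' i - \<Psi>' j))^2 \<le> w'$i + w'$j" by (simp add: ddn w'_def)
  next
    have "(\<Sum>k\<in>UNIV. \<pi> k *\<^sub>R \<Psi>' k) = (1 / sqrt c') *\<^sub>R (\<Sum>k\<in>UNIV. \<pi> k *\<^sub>R \<Psi> k)"
      by (simp add: \<Psi>'_def scaleR_sum_right)
    thus "(\<Sum>k\<in>UNIV. \<pi> k *\<^sub>R \<Psi>' k) = 0" using m by simp
  next
    have "(\<Sum>i\<in>UNIV. \<pi> i * w'$i) = ((\<Sum>i\<in>UNIV. \<pi> i * w$i) + \<delta> * (\<Sum>i\<in>UNIV. \<pi> i)) / c'"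
      by (simp add: w'_def sum_divide_distrib[symmetric] distrib_left sum.distrib sum_distrib_left
          sum_distrib_right mult.commute)
    also have "\<dots> = 1" using cp by (simp add: sum1 \<delta>_def)
    finally show "(\<Sum>i\<in>UNIV. \<pi> i * w'$i) = 1" .
  qed
  have "emb_obj \<pi> \<Psi>' = emb_obj \<pi> \<Psi> / c'"
    by (simp add: emb_obj_def nn sum_divide_distrib)
  thus ?thesis using feas v by auto
qed

lemma achieve:
  assumes "c' > 1 - lambda2_star E \<pi>"
  shows "\<exists>w \<Psi>. feasible_emb E \<pi> w \<Psi> \<and> emb_obj \<pi> \<Psi> = 1 / c'"
proof -
  have "c' > 0" using assms L_bounds by linarith
  thus ?thesis using key[OF assms] normalize by blast
qed

lemma tau_eq: "lambda2_star E \<pi> < 1 \<Longrightarrow> tau2_star E \<pi> = ereal (1 / (1 - lambda2_star E \<pi>))"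
  by (simp add: tau2_star_def divide_inverse)

lemma tau_inf: "lambda2_star E \<pi> = 1 \<Longrightarrow> tau2_star E \<pi> = \<infinity>"
  by (simp add: tau2_star_def)

lemma attain:
  assumes Llt: "lambda2_star E \<pi> < 1"
  shows "\<exists>w \<Psi>. feasible_emb E \<pi> w \<Psi> \<and> emb_obj \<pi> \<Psi> = 1 / (1 - lambda2_star E \<pi>)"
proof -
  define c where "c = 1 - lambda2_star E \<pi>"
  have cp: "c > 0" using Llt by (simp add: c_def)
  define Q where "Q m x \<longleftrightarrow> (\<Sum>k\<in>UNIV. \<pi> k *\<^sub>R (snd x)$k) = 0 \<and> emb_obj \<pi> (\<lambda>k. (snd x)$k) = 1 \<and>
     (\<forall>i j. (i, j) \<in> E \<longrightarrow> dd (\<lambda>k. (snd x)$k) i j \<le> (fst x)$i + (fst x)$j) \<and>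
     (\<Sum>i\<in>UNIV. \<pi> i * (fst x)$i) \<le> c + 1 / real (Suc m)" for m and x :: "(real^'n) \<times> (real^'n^'n)"
  have "\<forall>m. \<exists>x. Q m x"
  proof
    fix m
    have "c + 1 / real (Suc m) > 1 - lambda2_star E \<pi>" by (simp add: c_def)
    from key[OF this] obtain \<Psi> w where
      "(\<Sum>k\<in>UNIV. \<pi> k *\<^sub>R \<Psi> k) = 0" "emb_obj \<pi> \<Psi> = 1"
      "\<forall>i j. (i, j) \<in> E \<longrightarrow> dd \<Psi> i j \<le> w$i + w$j" "(\<Sum>i\<in>UNIV. \<pi> i * w$i) \<le> c + 1 / real (Suc m)"
      by blast
    thus "\<exists>x. Q m x" unfolding Q_def by (intro exI[of _ "(w, \<chi> k. \<Psi> k)"]) (simp add: vec_nth_lambda_eq)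
  qed
  then obtain X where X: "\<And>m. Q m (X m)" by metis
  have pik: "\<pi> k > 0" for k using pos by simp
  have wnn: "(fst (X m))$i \<ge> 0" for m i
  proof -
    have "dd (\<lambda>k. (snd (X m))$k) i i \<le> (fst (X m))$i + (fst (X m))$i"
      using X[of m] loops unfolding Q_def by blast
    thus ?thesis by (simp add: dd_def)
  qed
  have wle: "(fst (X m))$i \<le> (c + 1) / \<pi> i" for m i
  proof -
    have "\<pi> i * (fst (X m))$i \<le> (\<Sum>j\<in>UNIV. \<pi> j * (fst (X m))$j)"
      using wnn pik by (intro member_le_sum) (auto simp: less_imp_le)
    also have "\<dots> \<le> c + 1 / real (Suc m)" using X[of m] by (simp add: Q_def)
    also have "\<dots> \<le> c + 1" by simp
    finally show ?thesis using pik[of i] by (simp add: field_simps)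
  qed
  have psle: "norm ((snd (X m))$k) \<le> 1 + 1 / \<pi> k" for m k
  proof -
    have "\<pi> k * (norm ((snd (X m))$k))^2 \<le> emb_obj \<pi> (\<lambda>k. (snd (X m))$k)"
      unfolding emb_obj_def using pik by (intro member_le_sum) (auto simp: less_imp_le)
    also have "\<dots> = 1" using X[of m] by (simp add: Q_def)
    finally have "(norm ((snd (X m))$k))^2 \<le> 1 / \<pi> k" using pik[of k] by (simp add: field_simps)
    moreover have "x \<le> 1 + a" if "x^2 \<le> a" "x \<ge> 0" for x a :: real
    proof (cases "x \<le> 1")
      case True thus ?thesis using that(1) by (smt (verit) zero_le_power2)
    next
      case False
      hence "x \<le> x^2" by (simp add: power2_eq_square)
      thus ?thesis using that by simp
    qed
    ultimately show ?thesis by simp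
  qed
  define Bd where "Bd = (\<Sum>i\<in>UNIV. (c + 1) / \<pi> i) + (\<Sum>k\<in>UNIV. 1 + 1 / \<pi> k)"
  have "norm (X m) \<le> Bd" for m
  proof -
    have "norm (X m) \<le> norm (fst (X m)) + norm (snd (X m))"
      using norm_Pair_le[of "fst (X m)" "snd (X m)"] by simp
    also have "norm (fst (X m)) \<le> (\<Sum>i\<in>UNIV. \<bar>(fst (X m))$i\<bar>)" by (rule norm_le_l1_cart)
    also have "\<dots> \<le> (\<Sum>i\<in>UNIV. (c + 1) / \<pi> i)"
      using wnn wle by (intro sum_mono) simp
    also have "norm (snd (X m)) \<le> (\<Sum>k\<in>UNIV. norm ((snd (X m))$k))"
      unfolding norm_vec_def by (rule L2_set_le_sum) simp
    also have "\<dots> \<le> (\<Sum>k\<in>UNIV. 1 + 1 / \<pi> k)" using psle by (intro sum_mono) simp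
    finally show ?thesis by (simp add: Bd_def)
  qed
  hence "bounded (range X)" unfolding bounded_iff by blast
  then obtain l r where r: "strict_mono r" and lim: "(X \<circ> r) \<longlonglongrightarrow> l"
    using bounded_imp_convergent_subsequence by blast
  define Y where "Y = X \<circ> r"
  have Ylim: "Y \<longlonglongrightarrow> l" using lim by (simp add: Y_def)
  have QY: "Q (r m) (Y m)" for m using X by (simp add: Y_def)
  define w where "w = fst l"
  define \<Psi> where "\<Psi> = (\<lambda>k. (snd l)$k)"
  have m: "(\<Sum>k\<in>UNIV. \<pi> k *\<^sub>R \<Psi> k) = 0"
  proof -
    have "(\<lambda>m. \<Sum>k\<in>UNIV. \<pi> k *\<^sub>R (snd (Y m))$k) \<longlonglongrightarrow> (\<Sum>k\<in>UNIV. \<pi> k *\<^sub>R (snd l)$k)"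
      by (intro tendsto_intros Ylim)
    moreover have "(\<lambda>m. \<Sum>k\<in>UNIV. \<pi> k *\<^sub>R (snd (Y m))$k) = (\<lambda>m. 0)"
      using QY by (simp add: Q_def)
    ultimately show ?thesis by (simp add: \<Psi>_def LIMSEQ_const_iff)
  qed
  have v: "emb_obj \<pi> \<Psi> = 1"
  proof -
    have "(\<lambda>m. \<Sum>k\<in>UNIV. \<pi> k * (norm ((snd (Y m))$k))^2) \<longlonglongrightarrow> (\<Sum>k\<in>UNIV. \<pi> k * (norm ((snd l)$k))^2)"
      by (intro tendsto_intros Ylim)
    moreover have "(\<lambda>m. \<Sum>k\<in>UNIV. \<pi> k * (norm ((snd (Y m))$k))^2) = (\<lambda>m. 1)"
      using QY by (simp add: Q_def emb_obj_def)
    ultimately show ?thesis by (simp add: \<Psi>_def LIMSEQ_const_iff emb_obj_def)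
  qed
  have ed: "\<forall>i j. (i, j) \<in> E \<longrightarrow> dd \<Psi> i j \<le> w$i + w$j"
  proof (intro allI impI)
    fix i j assume ij: "(i, j) \<in> E"
    have "(\<lambda>m. (norm ((snd (Y m))$i - (snd (Y m))$j))^2 - (fst (Y m))$i - (fst (Y m))$j)
        \<longlonglongrightarrow> (norm ((snd l)$i - (snd l)$j))^2 - (fst l)$i - (fst l)$j"
      by (intro tendsto_intros Ylim)
    moreover have "\<forall>m. (norm ((snd (Y m))$i - (snd (Y m))$j))^2 - (fst (Y m))$i - (fst (Y m))$j \<le> 0"
    proof
      fix m
      have "dd (\<lambda>k. (snd (Y m))$k) i j \<le> (fst (Y m))$i + (fst (Y m))$j"
        using QY[of m] ij unfolding Q_def by blast
      thus "(norm ((snd (Y m))$i - (snd (Y m))$j))^2 - (fst (Y m))$i - (fst (Y m))$j \<le> 0"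
        by (simp add: dd_def)
    qed
    ultimately have "(norm ((snd l)$i - (snd l)$j))^2 - (fst l)$i - (fst l)$j \<le> 0"
      by (intro LIMSEQ_le_const2) auto
    thus "dd \<Psi> i j \<le> w$i + w$j" by (simp add: dd_def \<Psi>_def w_def)
  qed
  have sw: "(\<Sum>i\<in>UNIV. \<pi> i * w$i) \<le> c"
  proof -
    have "(\<lambda>m. \<Sum>i\<in>UNIV. \<pi> i * (fst (Y m))$i) \<longlonglongrightarrow> (\<Sum>i\<in>UNIV. \<pi> i * (fst l)$i)"
      by (intro tendsto_intros Ylim)
    moreover have "(\<lambda>m. c + inverse (real (Suc (r m)))) \<longlonglongrightarrow> c + 0"
    proof (intro tendsto_intros)
      show "(\<lambda>m. inverse (real (Suc (r m)))) \<longlonglongrightarrow> 0"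
        using LIMSEQ_subseq_LIMSEQ[OF LIMSEQ_inverse_real_of_nat r] by (simp add: o_def)
    qed
    moreover have "\<forall>m. (\<Sum>i\<in>UNIV. \<pi> i * (fst (Y m))$i) \<le> c + inverse (real (Suc (r m)))"
      using QY by (simp add: Q_def divide_inverse)
    ultimately show ?thesis unfolding w_def by (intro LIMSEQ_le) auto
  qed
  show ?thesis using normalize[OF m v ed sw cp] by (simp add: c_def)
qed

end

theorem proposition1:
  fixes E :: "('n::finite \<times> 'n) set" and \<pi> :: "'n \<Rightarrow> real"
  assumes "CARD('n) \<ge> 2"
    and "\<forall>i j. (i, j) \<in> E \<longrightarrow> (j, i) \<in> E"
    and "\<forall>i. (i, i) \<in> E"
    and "\<forall>i. \<pi> i > 0"
    and "(\<Sum>i\<in>UNIV. \<pi> i) = 1"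
  shows "(\<forall>w \<Psi>. feasible_emb E \<pi> w \<Psi> \<longrightarrow> ereal (emb_obj \<pi> \<Psi>) \<le> tau2_star E \<pi>)
    \<and> tau2_star E \<pi> = (SUP p\<in>{(w, \<Psi>). feasible_emb E \<pi> w \<Psi>}. ereal (emb_obj \<pi> (snd p)))
    \<and> (tau2_star E \<pi> \<noteq> \<infinity> \<longrightarrow>
         (\<exists>w \<Psi>. feasible_emb E \<pi> w \<Psi> \<and> ereal (emb_obj \<pi> \<Psi>) = tau2_star E \<pi>))"
proof -
  interpret setting E \<pi> using assms by unfold_locales
  define L where "L = lambda2_star E \<pi>"
  define SS where "SS = (SUP p\<in>{(w, \<Psi>). feasible_emb E \<pi> w \<Psi>}. ereal (emb_obj \<pi> (snd p)))"
  have Lb: "-1 \<le> L" "L \<le> 1" using L_bounds by (simp_all add: L_def)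
  have c1: "\<forall>w \<Psi>. feasible_emb E \<pi> w \<Psi> \<longrightarrow> ereal (emb_obj \<pi> \<Psi>) \<le> tau2_star E \<pi>"
    using weak2 by blast
  have SSge: "ereal (1 / c') \<le> SS" if "c' > 1 - L" for c'
  proof -
    have "c' > 1 - lambda2_star E \<pi>" using that by (simp add: L_def)
    then obtain w \<Psi> where "feasible_emb E \<pi> w \<Psi>" "emb_obj \<pi> \<Psi> = 1 / c'"
      using achieve by blast
    thus ?thesis unfolding SS_def by (intro SUP_upper2[of "(w, \<Psi>)"]) auto
  qed
  have c2: "tau2_star E \<pi> = SS"
  proof (rule antisym)
    show "SS \<le> tau2_star E \<pi>" unfolding SS_def using c1 by (intro SUP_least) auto
    show "tau2_star E \<pi> \<le> SS"
    proof (rule dense_le)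
      fix y assume y: "y < tau2_star E \<pi>"
      have S0: "0 \<le> SS"
      proof -
        have "ereal (1 / (2 - L)) \<le> SS" using SSge[of "2 - L"] by simp
        moreover have "0 \<le> 1 / (2 - L)" using Lb by simp
        ultimately show ?thesis by (metis ereal_less_eq(5) order_trans)
      qed
      show "y \<le> SS"
      proof (cases "y \<le> 0")
        case True thus ?thesis using S0 by simp
      next
        case False
        hence "y \<noteq> -\<infinity>" by auto
        moreover have "y \<noteq> \<infinity>" using y by auto
        ultimately obtain r where r: "y = ereal r" by (cases y) auto
        have rp: "r > 0" using False r by simp
        have "1 / r > 1 - L"
        proof (cases "L = 1")
          case True thus ?thesis using rp by simp
        next
          case False
          hence "L < 1" using Lb by simp
          hence "r < 1 / (1 - L)" using y r tau_eq by (simp add: L_def)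
          thus ?thesis using rp \<open>L < 1\<close> by (simp add: field_simps)
        qed
        from SSge[OF this] show ?thesis using r rp by simp
      qed
    qed
  qed
  have c3: "tau2_star E \<pi> \<noteq> \<infinity> \<longrightarrow>
         (\<exists>w \<Psi>. feasible_emb E \<pi> w \<Psi> \<and> ereal (emb_obj \<pi> \<Psi>) = tau2_star E \<pi>)"
  proof
    assume "tau2_star E \<pi> \<noteq> \<infinity>"
    hence "L \<noteq> 1" using tau_inf by (auto simp: L_def)
    hence "L < 1" using Lb by simp
    thus "\<exists>w \<Psi>. feasible_emb E \<pi> w \<Psi> \<and> ereal (emb_obj \<pi> \<Psi>) = tau2_star E \<pi>"
      using attain tau_eq by (auto simp: L_def)
  qed
  show ?thesis using c1 c2 c3 by (simp add: SS_def)
qed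


end
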